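(* Let $M$ be a message set such that $G_M$ is an oriented ring. For any $M$-system $S$, $S$ is $1$-synchronizable if and only if it is synchronizable.
   Context: A message set $M=(\Sigma_M,N,\mathrm{src},\mathrm{dst})$: finite set of messages, $N\ge1$ peers, $\mathrm{src}(a)\neq\mathrm{dst}(a)\in\{1,\dots,N\}$. Its communication topology $G_M$ is the directed graph on $\{1,\dots,N\}$ with an edge $i\to j$ iff some message $a$ has $\mathrm{src}(a)=i$, $\mathrm{dst}(a)=j$; $G_M$ is an oriented ring if its edge set is exactly $\{(i,j)\mid j=i+1 \bmod N\}$. Actions $!a$ (by peer $\mathrm{src}(a)$), $?a$ (by peer $\mathrm{dst}(a)$); traces are finite action sequences; $!?a$ abbreviates $!a\cdot?a$. For a trace $\tau$, $\pi_!(\tau)$ is the sequence of sent messages; $\mathrm{buf}_{i\to j}(\tau)$ is the word $w$ (if any) with (sent on $i\to j$) $=$ (received on $i\to j$)$\cdot w$. $\tau$ is FIFO ($k$-bounded FIFO) if for all $i,j$ and prefixes $\tau'$, $\mathrm{buf}_{i\to j}(\tau')$ is defined (and has length $\le k$); synchronous if of the form $!?a_1\cdots!?a_k$. An $M$-system $S=(P_1,\dots,P_N)$: finite automata $P_i$ (all states accepting) over actions of peer $i$, with one FIFO channel per ordered pair $i\neq j$. A configuration: one control state per peer and contents $w_{i,j}$ of channels; stable if all channels empty. $!a$ ($\mathrm{src}(a)=i,\mathrm{dst}(a)=j$) moves $P_i$ and appends $a$ to $w_{i,j}$; $?a$ moves $P_j$ and removes $a$ from the head of $w_{i,j}$; $c_0$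 is the initial configuration. $T_k(S)$ ($k\ge1$): $k$-bounded FIFO traces $\tau$ with $c_0\xrightarrow{\tau}c$ for some $c$; $T_0(S)$: synchronous such traces; $T_\omega(S)=\bigcup_kT_k(S)$. $ST_k(S)=\{\pi_!(\tau)\mid\tau\in T_k(S)\}\cup\{(\pi_!(\tau),c)\mid c_0\xrightarrow{\tau}c,\ c\text{ stable},\ \tau\in T_k(S)\}$. $S$ is synchronizable if $ST_0(S)=ST_\omega(S)$ and $1$-synchronizable if $ST_0(S)=ST_1(S)$. *)

theory Defs
  imports Main
begin

record 'm msgset =
  msgs   :: "'m set"
  npeers :: nat           (* N, peers are 1..N *)
  src    :: "'m \<Rightarrow> nat"
  dst    :: "'m \<Rightarrow> nat"

definition wf_msgset :: "'m msgset \<Rightarrow> bool" where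
  "wf_msgset M \<longleftrightarrow> finite (msgs M) \<and> npeers M \<ge> 1 \<and>
     (\<forall>a\<in>msgs M. src M a \<in> {1..npeers M} \<and> dst M a \<in> {1..npeers M} \<and> src M a \<noteq> dst M a)"

definition topology :: "'m msgset \<Rightarrow> (nat \<times> nat) set" where
  "topology M = {(src M a, dst M a) | a. a \<in> msgs M}"

text \<open>Oriented ring: edge set exactly i -> i+1 mod N, peers numbered 1..N
  (so the successor of N is 1).\<close>
definition oriented_ring :: "'m msgset \<Rightarrow> bool" where
  "oriented_ring M \<longleftrightarrow>
     topology M = {(i, (i mod npeers M) + 1) | i. i \<in> {1..npeers M}}"

datatype 'm action = Send 'm | Recv 'm

definition actor :: "'m msgset \<Rightarrow> 'm action \<Rightarrow> nat" where
  "actor M act = (case act of Send a \<Rightarrow> src M a | Recv a \<Rightarrow> dst M a)"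

definition msg_of :: "'m action \<Rightarrow> 'm" where
  "msg_of act = (case act of Send a \<Rightarrow> a | Recv a \<Rightarrow> a)"

definition sends :: "'m action list \<Rightarrow> 'm list" where
  "sends \<tau> = [a. Send a \<leftarrow> \<tau>]"

definition sent_on :: "'m msgset \<Rightarrow> nat \<Rightarrow> nat \<Rightarrow> 'm action list \<Rightarrow> 'm list" where
  "sent_on M i j \<tau> = [a. Send a \<leftarrow> \<tau>, src M a = i \<and> dst M a = j]"

definition recv_on :: "'m msgset \<Rightarrow> nat \<Rightarrow> nat \<Rightarrow> 'm action list \<Rightarrow> 'm list" where
  "recv_on M i j \<tau> = [a. Recv a \<leftarrow> \<tau>, src M a = i \<and> dst M a = j]"

definition is_buf :: "'m msgset \<Rightarrow> nat \<Rightarrow> nat \<Rightarrow> 'm action list \<Rightarrow> 'm list \<Rightarrow> bool" where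
  "is_buf M i j \<tau> w \<longleftrightarrow> sent_on M i j \<tau> = recv_on M i j \<tau> @ w"

definition fifo_trace :: "'m msgset \<Rightarrow> 'm action list \<Rightarrow> bool" where
  "fifo_trace M \<tau> \<longleftrightarrow> (\<forall>n \<le> length \<tau>. \<forall>i j. \<exists>w. is_buf M i j (take n \<tau>) w)"

definition bounded_fifo_trace :: "'m msgset \<Rightarrow> nat \<Rightarrow> 'm action list \<Rightarrow> bool" where
  "bounded_fifo_trace M k \<tau> \<longleftrightarrow>
     (\<forall>n \<le> length \<tau>. \<forall>i j. \<exists>w. is_buf M i j (take n \<tau>) w \<and> length w \<le> k)"

definition synchronous_trace :: "'m action list \<Rightarrow> bool" where
  "synchronous_trace \<tau> \<longleftrightarrow> (\<exists>as. \<tau> = concat (map (\<lambda>a. [Send a, Recv a]) as))"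

text \<open>A peer: finite automaton (all states accepting), possibly nondeterministic.\<close>
record ('s, 'm) peer =
  states :: "'s set"
  init   :: 's
  trans  :: "('s \<times> 'm action \<times> 's) set"

definition wf_system :: "'m msgset \<Rightarrow> (nat \<Rightarrow> ('s, 'm) peer) \<Rightarrow> bool" where
  "wf_system M P \<longleftrightarrow> (\<forall>i\<in>{1..npeers M}.
      finite (states (P i)) \<and> init (P i) \<in> states (P i) \<and> finite (trans (P i)) \<and>
      (\<forall>(q, act, q') \<in> trans (P i). q \<in> states (P i) \<and> q' \<in> states (P i) \<and>
          msg_of act \<in> msgs M \<and> actor M act = i))"

record ('s, 'm) config =
  ctrl  :: "nat \<Rightarrow> 's"
  chans :: "nat \<Rightarrow> nat \<Rightarrow> 'm list"

definition init_config :: "(nat \<Rightarrow> ('s, 'm) peer) \<Rightarrow> ('s, 'm) config" where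
  "init_config P = \<lparr> ctrl = (\<lambda>i. init (P i)), chans = (\<lambda>i j. []) \<rparr>"

definition stable :: "('s, 'm) config \<Rightarrow> bool" where
  "stable c \<longleftrightarrow> (\<forall>i j. chans c i j = [])"

inductive step :: "'m msgset \<Rightarrow> (nat \<Rightarrow> ('s, 'm) peer) \<Rightarrow> ('s, 'm) config \<Rightarrow> 'm action
                    \<Rightarrow> ('s, 'm) config \<Rightarrow> bool"
  for M P where
  send: "\<lbrakk> a \<in> msgs M; i = src M a; j = dst M a; (ctrl c i, Send a, q') \<in> trans (P i) \<rbrakk>
     \<Longrightarrow> step M P c (Send a)
           \<lparr> ctrl = (ctrl c)(i := q'),
             chans = (chans c)(i := (chans c i)(j := chans c i j @ [a])) \<rparr>"
| recv: "\<lbrakk> a \<in> msgs M; i = src M a; j = dst M a; chans c i j = a # w;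
           (ctrl c j, Recv a, q') \<in> trans (P j) \<rbrakk>
     \<Longrightarrow> step M P c (Recv a)
           \<lparr> ctrl = (ctrl c)(j := q'),
             chans = (chans c)(i := (chans c i)(j := w)) \<rparr>"

inductive run :: "'m msgset \<Rightarrow> (nat \<Rightarrow> ('s, 'm) peer) \<Rightarrow> ('s, 'm) config \<Rightarrow> 'm action list
                   \<Rightarrow> ('s, 'm) config \<Rightarrow> bool"
  for M P where
  run_nil: "run M P c [] c"
| run_cons: "\<lbrakk> step M P c act c'; run M P c' \<tau> c'' \<rbrakk> \<Longrightarrow> run M P c (act # \<tau>) c''"

definition traces :: "'m msgset \<Rightarrow> (nat \<Rightarrow> ('s, 'm) peer) \<Rightarrow> nat \<Rightarrow> 'm action list set" where
  "traces M P k = {\<tau>. (if k = 0 then synchronous_trace \<tau> else bounded_fifo_trace M k \<tau>)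
                        \<and> (\<exists>c. run M P (init_config P) \<tau> c)}"

definition traces_omega :: "'m msgset \<Rightarrow> (nat \<Rightarrow> ('s, 'm) peer) \<Rightarrow> 'm action list set" where
  "traces_omega M P = (\<Union>k\<in>{1..}. traces M P k)"

definition send_traces :: "'m msgset \<Rightarrow> (nat \<Rightarrow> ('s, 'm) peer) \<Rightarrow> 'm action list set
                          \<Rightarrow> ('m list + ('m list \<times> ('s, 'm) config)) set" where
  "send_traces M P T =
     Inl ` {sends \<tau> | \<tau>. \<tau> \<in> T} \<union>
     Inr ` {(sends \<tau>, c) | \<tau> c. \<tau> \<in> T \<and> run M P (init_config P) \<tau> c \<and> stable c}"

definition ST :: "'m msgset \<Rightarrow> (nat \<Rightarrow> ('s, 'm) peer) \<Rightarrow> nat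
                   \<Rightarrow> ('m list + ('m list \<times> ('s, 'm) config)) set" where
  "ST M P k = send_traces M P (traces M P k)"

definition ST_omega :: "'m msgset \<Rightarrow> (nat \<Rightarrow> ('s, 'm) peer)
                   \<Rightarrow> ('m list + ('m list \<times> ('s, 'm) config)) set" where
  "ST_omega M P = send_traces M P (traces_omega M P)"

definition synchronizable :: "'m msgset \<Rightarrow> (nat \<Rightarrow> ('s, 'm) peer) \<Rightarrow> bool" where
  "synchronizable M P \<longleftrightarrow> ST M P 0 = ST_omega M P"

definition one_synchronizable :: "'m msgset \<Rightarrow> (nat \<Rightarrow> ('s, 'm) peer) \<Rightarrow> bool" where
  "one_synchronizable M P \<longleftrightarrow> ST M P 0 = ST M P 1"

end

theory Submission
  imports Defs "HOL-Library.Sublist"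
begin


definition nxt :: "'m msgset \<Rightarrow> nat \<Rightarrow> nat" where
  "nxt M i = i mod npeers M + 1"

definition Sc :: "'m msgset \<Rightarrow> nat \<Rightarrow> 'm action list \<Rightarrow> 'm list" where
  "Sc M i \<tau> = [a. Send a \<leftarrow> \<tau>, src M a = i]"

definition Rc :: "'m msgset \<Rightarrow> nat \<Rightarrow> 'm action list \<Rightarrow> 'm list" where
  "Rc M i \<tau> = [a. Recv a \<leftarrow> \<tau>, src M a = i]"

definition loc :: "'m msgset \<Rightarrow> nat \<Rightarrow> 'm action list \<Rightarrow> 'm action list" where
  "loc M i \<tau> = filter (\<lambda>act. actor M act = i) \<tau>"

definition sync_acts :: "'m list \<Rightarrow> 'm action list" where
  "sync_acts w = concat (map (\<lambda>a. [Send a, Recv a]) w)"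

definition proj :: "'m msgset \<Rightarrow> nat \<Rightarrow> 'm list \<Rightarrow> 'm action list" where
  "proj M i w = loc M i (sync_acts w)"

inductive lpath :: "('s, 'm) peer \<Rightarrow> 's \<Rightarrow> 'm action list \<Rightarrow> 's \<Rightarrow> bool" for p where
  lp_nil: "lpath p q [] q"
| lp_cons: "(q, act, q') \<in> trans p \<Longrightarrow> lpath p q' u q'' \<Longrightarrow> lpath p q (act # u) q''"

definition fifoP :: "'m msgset \<Rightarrow> (nat \<Rightarrow> 'm list) \<Rightarrow> 'm action list \<Rightarrow> bool" where
  "fifoP M P0 \<tau> \<longleftrightarrow> (\<forall>n \<le> length \<tau>. \<forall>i. prefix (Rc M i (take n \<tau>)) (P0 i @ Sc M i (take n \<tau>)))"

lemma Sc_simps[simp]: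
  "Sc M i [] = []" "Sc M i (xs @ ys) = Sc M i xs @ Sc M i ys"
  "Sc M i (Send a # xs) = (if src M a = i then a # Sc M i xs else Sc M i xs)"
  "Sc M i (Recv a # xs) = Sc M i xs"
  by (auto simp: Sc_def)

lemma Rc_simps[simp]:
  "Rc M i [] = []" "Rc M i (xs @ ys) = Rc M i xs @ Rc M i ys"
  "Rc M i (Recv a # xs) = (if src M a = i then a # Rc M i xs else Rc M i xs)"
  "Rc M i (Send a # xs) = Rc M i xs"
  by (auto simp: Rc_def)

lemma loc_simps[simp]:
  "loc M i [] = []" "loc M i (xs @ ys) = loc M i xs @ loc M i ys"
  "loc M i (x # xs) = (if actor M x = i then x # loc M i xs else loc M i xs)"
  by (auto simp: loc_def)

lemma sends_simps[simp]:
  "sends [] = []" "sends (xs @ ys) = sends xs @ sends ys"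
  "sends (Send a # xs) = a # sends xs" "sends (Recv a # xs) = sends xs"
  by (auto simp: sends_def)

lemma actor_simps[simp]: "actor M (Send a) = src M a" "actor M (Recv a) = dst M a"
  by (auto simp: actor_def)

lemma msg_of_simps[simp]: "msg_of (Send a) = a" "msg_of (Recv a) = a"
  by (auto simp: msg_of_def)

lemma sync_acts_simps[simp]:
  "sync_acts [] = []" "sync_acts (xs @ ys) = sync_acts xs @ sync_acts ys"
  "sync_acts (a # xs) = Send a # Recv a # sync_acts xs"
  by (auto simp: sync_acts_def)

lemma sends_sync_acts[simp]: "sends (sync_acts w) = w"
  by (induction w) auto

lemma proj_simps[simp]:
  "proj M i [] = []" "proj M i (xs @ ys) = proj M i xs @ proj M i ys"
  "proj M i (a # xs) = (if src M a = i then [Send a] else []) @ (if dst M a = i then [Recv a] else []) @ proj M i xs"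
  by (auto simp: proj_def)

lemma lpath_append:
  "lpath p q (u @ v) q'' \<longleftrightarrow> (\<exists>q'. lpath p q u q' \<and> lpath p q' v q'')"
proof (induction u arbitrary: q)
  case Nil
  then show ?case by (auto intro: lpath.intros elim: lpath.cases)
next
  case (Cons a u)
  show ?case
  proof
    assume "lpath p q ((a # u) @ v) q''"
    then obtain q1 where "(q, a, q1) \<in> trans p" "lpath p q1 (u @ v) q''"
      by (auto elim: lpath.cases)
    then show "\<exists>q'. lpath p q (a # u) q' \<and> lpath p q' v q''"
      using Cons.IH by (auto intro: lpath.intros)
  next
    assume "\<exists>q'. lpath p q (a # u) q' \<and> lpath p q' v q''"
    then obtain q' q1 where "(q, a, q1) \<in> trans p" "lpath p q1 u q'" "lpath p q' v q''"
      by (auto elim: lpath.cases)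
    then show "lpath p q ((a # u) @ v) q''"
      using Cons.IH by (auto intro: lpath.intros)
  qed
qed

lemma lpath_single: "lpath p q [a] q' \<longleftrightarrow> (q, a, q') \<in> trans p"
  by (auto intro: lpath.intros elim: lpath.cases)

lemma lpath_snoc: "lpath p q (u @ [a]) q'' \<longleftrightarrow> (\<exists>q'. lpath p q u q' \<and> (q', a, q'') \<in> trans p)"
  by (simp add: lpath_append lpath_single)

lemma lpath_prefix: "lpath p q (u @ v) q'' \<Longrightarrow> \<exists>q'. lpath p q u q'"
  by (auto simp: lpath_append)

lemma run_append:
  "run M P c (t1 @ t2) c'' \<longleftrightarrow> (\<exists>c'. run M P c t1 c' \<and> run M P c' t2 c'')"
proof (induction t1 arbitrary: c)
  case Nil
  then show ?case by (auto intro: run.intros elim: run.cases)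
next
  case (Cons a t1)
  show ?case
  proof
    assume "run M P c ((a # t1) @ t2) c''"
    then obtain c1 where "step M P c a c1" "run M P c1 (t1 @ t2) c''"
      by (auto elim: run.cases)
    then show "\<exists>c'. run M P c (a # t1) c' \<and> run M P c' t2 c''"
      using Cons.IH by (auto intro: run.intros)
  next
    assume "\<exists>c'. run M P c (a # t1) c' \<and> run M P c' t2 c''"
    then obtain c' c1 where "step M P c a c1" "run M P c1 t1 c'" "run M P c' t2 c''"
      by (auto elim: run.cases)
    then show "run M P c ((a # t1) @ t2) c''"
      using Cons.IH by (auto intro: run.intros)
  qed
qed

lemma run_single: "run M P c [a] c' \<longleftrightarrow> step M P c a c'"
  by (auto intro: run.intros elim: run.cases)

lemma run_snoc: "run M P c (t @ [a]) c'' \<longleftrightarrow> (\<exists>c'. run M P c t c' \<and> step M P c' a c'')"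
  by (simp add: run_append run_single)


definition prv :: "'m msgset \<Rightarrow> nat \<Rightarrow> nat" where
  "prv M k = (if k = 1 then npeers M else k - 1)"

locale ring_sys =
  fixes M :: "'m msgset" and P :: "nat \<Rightarrow> ('s, 'm) peer"
  assumes wfm: "wf_msgset M" and orr: "oriented_ring M" and wfs: "wf_system M P"
begin

abbreviation "N \<equiv> npeers M"

lemma msg_top: "a \<in> msgs M \<Longrightarrow> src M a \<in> {1..N} \<and> dst M a = nxt M (src M a)"
proof -
  assume a: "a \<in> msgs M"
  have "(src M a, dst M a) \<in> topology M" using a by (auto simp: topology_def)
  then show ?thesis using orr by (auto simp: oriented_ring_def nxt_def)
qed

lemma N_ge1: "N \<ge> 1" using wfm by (simp add: wf_msgset_def)

lemma msg_src_dst: "a \<in> msgs M \<Longrightarrow> src M a \<noteq> dst M a"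
  using wfm by (auto simp: wf_msgset_def)

lemma N_ge2: "N \<ge> 2"
proof (rule ccontr)
  assume "\<not> N \<ge> 2"
  then have N1: "N = 1" using N_ge1 by simp
  have "(1, 1 mod N + 1) \<in> topology M" using orr N1 by (auto simp: oriented_ring_def)
  then obtain a where "a \<in> msgs M" "src M a = 1" "dst M a = 1" using N1 by (auto simp: topology_def)
  then show False using msg_src_dst[of a] by simp
qed

lemma nxt_range: "i \<in> {1..N} \<Longrightarrow> nxt M i \<in> {1..N}"
proof -
  have "i mod N < N" using N_ge1 by simp
  then show ?thesis by (simp add: nxt_def)
qed

lemma nxt_neq: "i \<in> {1..N} \<Longrightarrow> nxt M i \<noteq> i"
proof -
  assume i: "i \<in> {1..N}"
  show ?thesis
  proof (cases "i = N")
    case True then show ?thesis using N_ge2 by (simp add: nxt_def)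
  next
    case False then have "i < N" using i by auto
    then show ?thesis by (simp add: nxt_def)
  qed
qed

lemma prv_range: "k \<in> {1..N} \<Longrightarrow> prv M k \<in> {1..N}"
  using N_ge1 by (auto simp: prv_def)

lemma nxt_prv: "k \<in> {1..N} \<Longrightarrow> nxt M (prv M k) = k"
proof -
  assume k: "k \<in> {1..N}"
  show ?thesis
  proof (cases "k = 1")
    case True then show ?thesis by (simp add: prv_def nxt_def)
  next
    case False then have "k - 1 < N" "k \<ge> 2" using k by auto
    then show ?thesis using False by (simp add: prv_def nxt_def)
  qed
qed

lemma prv_nxt: "i \<in> {1..N} \<Longrightarrow> prv M (nxt M i) = i"
proof -
  assume i: "i \<in> {1..N}"
  show ?thesis
  proof (cases "i = N")
    case True then show ?thesis using N_ge2 by (simp add: prv_def nxt_def)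
  next
    case False then have "i < N" "i \<ge> 1" using i by auto
    then show ?thesis by (simp add: prv_def nxt_def)
  qed
qed

lemma nxt_inj: "i \<in> {1..N} \<Longrightarrow> i' \<in> {1..N} \<Longrightarrow> nxt M i = nxt M i' \<Longrightarrow> i = i'"
  by (metis prv_nxt)

lemma prv_neq: "k \<in> {1..N} \<Longrightarrow> prv M k \<noteq> k"
  by (metis nxt_neq nxt_prv prv_range)

lemma dst_iff: "a \<in> msgs M \<Longrightarrow> k \<in> {1..N} \<Longrightarrow> dst M a = k \<longleftrightarrow> src M a = prv M k"
  by (metis msg_top nxt_prv prv_nxt)

lemma dst_range: "a \<in> msgs M \<Longrightarrow> dst M a \<in> {1..N}"
  using msg_top nxt_range by auto

definition msgs_ok :: "'m action list \<Rightarrow> bool" where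
  "msgs_ok \<tau> \<longleftrightarrow> (\<forall>act\<in>set \<tau>. msg_of act \<in> msgs M)"

lemma msgs_ok_simps[simp]:
  "msgs_ok []" "msgs_ok (xs @ ys) \<longleftrightarrow> msgs_ok xs \<and> msgs_ok ys"
  "msgs_ok (x # xs) \<longleftrightarrow> msg_of x \<in> msgs M \<and> msgs_ok xs"
  by (auto simp: msgs_ok_def)

definition chan_of :: "'m action list \<Rightarrow> nat \<Rightarrow> nat \<Rightarrow> 'm list" where
  "chan_of \<tau> i j = (if j = nxt M i then drop (length (Rc M i \<tau>)) (Sc M i \<tau>) else [])"

definition RC :: "'m action list \<Rightarrow> ('s, 'm) config \<Rightarrow> bool" where
  "RC \<tau> c \<longleftrightarrow> msgs_ok \<tau> \<and> fifoP M (\<lambda>_. []) \<tau> \<and>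
     (\<forall>i\<in>{1..N}. lpath (P i) (init (P i)) (loc M i \<tau>) (ctrl c i)) \<and>
     (\<forall>i. i \<notin> {1..N} \<longrightarrow> ctrl c i = init (P i)) \<and>
     chans c = chan_of \<tau>"

lemma take_snoc_le: "n \<le> length xs \<Longrightarrow> take n (xs @ [a]) = take n xs"
  by simp

lemma all_take_snoc:
  "(\<forall>n \<le> length (xs @ [a]). Q (take n (xs @ [a]))) \<longleftrightarrow>
   (\<forall>n \<le> length xs. Q (take n xs)) \<and> Q (xs @ [a])"
proof (intro iffI conjI allI impI)
  fix n assume H: "\<forall>n \<le> length (xs @ [a]). Q (take n (xs @ [a]))" and n: "n \<le> length xs"
  then have "Q (take n (xs @ [a]))" using n by (metis le_SucI length_append_singleton)
  then show "Q (take n xs)" using n by simp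
next
  assume H: "\<forall>n \<le> length (xs @ [a]). Q (take n (xs @ [a]))"
  then show "Q (xs @ [a])" by (metis order_refl take_all)
next
  fix n assume H: "(\<forall>n \<le> length xs. Q (take n xs)) \<and> Q (xs @ [a])" and n: "n \<le> length (xs @ [a])"
  show "Q (take n (xs @ [a]))"
  proof (cases "n \<le> length xs")
    case True then show ?thesis using H by simp
  next
    case False then have "n = length (xs @ [a])" using n by simp
    then show ?thesis using H by simp
  qed
qed

lemma fifoP_snoc:
  "fifoP M P0 (\<tau> @ [a]) \<longleftrightarrow> fifoP M P0 \<tau> \<and> (\<forall>i. prefix (Rc M i (\<tau> @ [a])) (P0 i @ Sc M i (\<tau> @ [a])))"
  unfolding fifoP_def by (rule all_take_snoc)

lemma fifoP_Nil[simp]: "fifoP M P0 [] \<longleftrightarrow> (\<forall>i. prefix [] (P0 i))"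
  by (simp add: fifoP_def)

lemma RC_Nil: "RC [] c \<longleftrightarrow> c = init_config P"
proof
  assume H: "RC [] c"
  have "ctrl c = ctrl (init_config P)"
  proof
    fix i show "ctrl c i = ctrl (init_config P) i"
      using H by (cases "i \<in> {1..N}") (auto simp: RC_def init_config_def elim: lpath.cases)
  qed
  moreover have "chans c = chans (init_config P)"
    using H by (auto simp: RC_def init_config_def chan_of_def fun_eq_iff)
  ultimately show "c = init_config P" by (simp add: config.equality)
next
  assume "c = init_config P"
  then show "RC [] c" by (auto simp: RC_def init_config_def chan_of_def fun_eq_iff intro: lpath.intros)
qed

lemma Sc_out: "msgs_ok \<tau> \<Longrightarrow> i \<notin> {1..N} \<Longrightarrow> Sc M i \<tau> = []"
proof (induction \<tau>)
  case (Cons a \<tau>)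
  then show ?case
  proof (cases a)
    case (Send b)
    then have "src M b \<in> {1..N}" using Cons.prems msg_top by auto
    then show ?thesis using Cons Send by auto
  qed auto
qed simp


lemma prefix_drop_Cons: "prefix (xs @ [b]) ys \<Longrightarrow> drop (length xs) ys = b # drop (Suc (length xs)) ys"
  by (auto simp: prefix_def)

lemma fifoP_last: "fifoP M P0 \<tau> \<Longrightarrow> prefix (Rc M i \<tau>) (P0 i @ Sc M i \<tau>)"
  unfolding fifoP_def by (metis order_refl take_all)

lemma chan_of_snoc_send:
  assumes b: "b \<in> msgs M" and pre: "prefix (Rc M (src M b) \<tau>) (Sc M (src M b) \<tau>)"
  shows "chan_of (\<tau> @ [Send b]) = (chan_of \<tau>)(src M b := (chan_of \<tau> (src M b))(dst M b := chan_of \<tau> (src M b) (dst M b) @ [b]))"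
proof (intro ext)
  fix i j
  have d: "dst M b = nxt M (src M b)" using msg_top b by auto
  have le: "length (Rc M (src M b) \<tau>) \<le> length (Sc M (src M b) \<tau>)" using pre prefix_length_le by blast
  show "chan_of (\<tau> @ [Send b]) i j = ((chan_of \<tau>)(src M b := (chan_of \<tau> (src M b))(dst M b := chan_of \<tau> (src M b) (dst M b) @ [b]))) i j"
    using d le by (auto simp: chan_of_def)
qed

lemma chan_of_snoc_recv:
  assumes b: "b \<in> msgs M" and pre: "prefix (Rc M (src M b) \<tau> @ [b]) (Sc M (src M b) \<tau>)"
  shows "chan_of \<tau> (src M b) (dst M b) = b # drop (Suc (length (Rc M (src M b) \<tau>))) (Sc M (src M b) \<tau>)"
    and "chan_of (\<tau> @ [Recv b]) = (chan_of \<tau>)(src M b := (chan_of \<tau> (src M b))(dst M b := drop (Suc (length (Rc M (src M b) \<tau>))) (Sc M (src M b) \<tau>)))"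
proof -
  have d: "dst M b = nxt M (src M b)" using msg_top b by auto
  show "chan_of \<tau> (src M b) (dst M b) = b # drop (Suc (length (Rc M (src M b) \<tau>))) (Sc M (src M b) \<tau>)"
    using d prefix_drop_Cons[OF pre] by (simp add: chan_of_def)
  show "chan_of (\<tau> @ [Recv b]) = (chan_of \<tau>)(src M b := (chan_of \<tau> (src M b))(dst M b := drop (Suc (length (Rc M (src M b) \<tau>))) (Sc M (src M b) \<tau>)))"
    using d by (auto simp: chan_of_def fun_eq_iff)
qed

lemma step_RC:
  assumes rc: "RC \<tau> c'" and st: "step M P c' a c"
  shows "RC (\<tau> @ [a]) c"
  using st
proof cases
  case (send b i j q')
  have bi: "i \<in> {1..N}" using send msg_top by auto
  have ff: "fifoP M (\<lambda>_. []) \<tau>" using rc by (simp add: RC_def)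
  have pre: "prefix (Rc M i' \<tau>) (Sc M i' \<tau>)" for i' using fifoP_last[OF ff] by simp
  have f2: "fifoP M (\<lambda>_. []) (\<tau> @ [a])"
    using ff pre send by (auto simp: fifoP_snoc)
  have paths: "\<forall>k\<in>{1..N}. lpath (P k) (init (P k)) (loc M k (\<tau> @ [a])) (ctrl c k)"
  proof
    fix k assume k: "k \<in> {1..N}"
    have pk: "lpath (P k) (init (P k)) (loc M k \<tau>) (ctrl c' k)" using rc k by (simp add: RC_def)
    show "lpath (P k) (init (P k)) (loc M k (\<tau> @ [a])) (ctrl c k)"
    proof (cases "k = i")
      case True then show ?thesis using pk send by (auto simp: lpath_snoc)
    next
      case False then show ?thesis using pk send by auto
    qed
  qed
  have outs: "\<forall>k. k \<notin> {1..N} \<longrightarrow> ctrl c k = init (P k)" using rc send bi by (auto simp: RC_def)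
  have ch: "chans c = chan_of (\<tau> @ [a])"
    using send rc chan_of_snoc_send[of b \<tau>] pre by (auto simp: RC_def)
  show ?thesis using rc send f2 paths outs ch by (auto simp: RC_def)
next
  case (recv b i j w q')
  have bj: "j \<in> {1..N}" using recv dst_range by auto
  have ff: "fifoP M (\<lambda>_. []) \<tau>" using rc by (simp add: RC_def)
  have ch0: "chan_of \<tau> i j = b # w" using rc recv by (simp add: RC_def)
  have d: "j = nxt M i" using recv msg_top by auto
  have pre: "prefix (Rc M i \<tau>) (Sc M i \<tau>)" using fifoP_last[OF ff] by simp
  then obtain z where z: "Sc M i \<tau> = Rc M i \<tau> @ z" by (auto simp: prefix_def)
  have "drop (length (Rc M i \<tau>)) (Sc M i \<tau>) = b # w" using ch0 d by (simp add: chan_of_def)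
  then have z2: "z = b # w" using z by simp
  have pre2: "prefix (Rc M i \<tau> @ [b]) (Sc M i \<tau>)" using z z2 by (simp add: prefix_def)
  have f2: "fifoP M (\<lambda>_. []) (\<tau> @ [a])"
  proof -
    have "prefix (Rc M i' (\<tau> @ [a])) (Sc M i' (\<tau> @ [a]))" for i'
      using recv pre2 fifoP_last[OF ff, of i'] by auto
    then show ?thesis using ff by (simp add: fifoP_snoc)
  qed
  have paths: "\<forall>k\<in>{1..N}. lpath (P k) (init (P k)) (loc M k (\<tau> @ [a])) (ctrl c k)"
  proof
    fix k assume k: "k \<in> {1..N}"
    have pk: "lpath (P k) (init (P k)) (loc M k \<tau>) (ctrl c' k)" using rc k by (simp add: RC_def)
    show "lpath (P k) (init (P k)) (loc M k (\<tau> @ [a])) (ctrl c k)"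
    proof (cases "k = j")
      case True then show ?thesis using pk recv by (auto simp: lpath_snoc)
    next
      case False then show ?thesis using pk recv by auto
    qed
  qed
  have outs: "\<forall>k. k \<notin> {1..N} \<longrightarrow> ctrl c k = init (P k)" using rc recv bj by (auto simp: RC_def)
  have wd: "w = drop (Suc (length (Rc M i \<tau>))) (Sc M i \<tau>)" using z z2 by simp
  have ch: "chans c = chan_of (\<tau> @ [a])"
    using recv rc chan_of_snoc_recv(2)[of b \<tau>] pre2 wd by (auto simp: RC_def)
  show ?thesis using rc recv f2 paths outs ch by (auto simp: RC_def)
qed

lemma RC_snoc_inv:
  assumes rc: "RC (\<tau> @ [a]) c"
  shows "\<exists>c'. RC \<tau> c' \<and> step M P c' a c"
proof -
  define i where "i = actor M a"
  have ma: "msg_of a \<in> msgs M" using rc by (simp add: RC_def)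
  have irange: "i \<in> {1..N}" using ma msg_top dst_range unfolding i_def
    by (cases a) auto
  have ff2: "fifoP M (\<lambda>_. []) (\<tau> @ [a])" using rc by (simp add: RC_def)
  then have ff: "fifoP M (\<lambda>_. []) \<tau>" by (simp add: fifoP_snoc)
  have pi0: "lpath (P i) (init (P i)) (loc M i (\<tau> @ [a])) (ctrl c i)"
    using rc irange unfolding RC_def by blast
  then have pi: "lpath (P i) (init (P i)) (loc M i \<tau> @ [a]) (ctrl c i)"
    by (simp add: i_def)
  then obtain q where q: "lpath (P i) (init (P i)) (loc M i \<tau>) q" "(q, a, ctrl c i) \<in> trans (P i)"
    by (auto simp: lpath_snoc)
  define c' where "c' = \<lparr> ctrl = (ctrl c)(i := q), chans = chan_of \<tau> \<rparr>"
  have rc': "RC \<tau> c'"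
  proof -
    have "\<forall>k\<in>{1..N}. lpath (P k) (init (P k)) (loc M k \<tau>) (ctrl c' k)"
    proof
      fix k assume k: "k \<in> {1..N}"
      show "lpath (P k) (init (P k)) (loc M k \<tau>) (ctrl c' k)"
      proof (cases "k = i")
        case True then show ?thesis using q by (simp add: c'_def)
      next
        case False
        then have e: "loc M k (\<tau> @ [a]) = loc M k \<tau>" by (simp add: i_def)
        have "lpath (P k) (init (P k)) (loc M k (\<tau> @ [a])) (ctrl c k)" using rc k unfolding RC_def by blast
        then show ?thesis using e False by (simp add: c'_def)
      qed
    qed
    then show ?thesis using rc ff irange by (auto simp: RC_def c'_def)
  qed
  have st: "step M P c' a c"
  proof (cases a)
    case (Send b)
    have ib: "i = src M b" using Send by (simp add: i_def)
    have bm: "b \<in> msgs M" using ma Send by simp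
    have pre: "prefix (Rc M (src M b) \<tau>) (Sc M (src M b) \<tau>)" using fifoP_last[OF ff] by simp
    have tr: "(ctrl c' i, Send b, ctrl c i) \<in> trans (P i)" using q Send by (simp add: c'_def)
    have "step M P c' (Send b) \<lparr> ctrl = (ctrl c')(i := ctrl c i),
             chans = (chans c')(i := (chans c' i)(dst M b := chans c' i (dst M b) @ [b])) \<rparr>"
      by (rule step.send) (use bm ib tr in auto)
    moreover have "\<lparr> ctrl = (ctrl c')(i := ctrl c i),
             chans = (chans c')(i := (chans c' i)(dst M b := chans c' i (dst M b) @ [b])) \<rparr> = c"
    proof (rule config.equality)
      show "ctrl \<lparr> ctrl = (ctrl c')(i := ctrl c i),
             chans = (chans c')(i := (chans c' i)(dst M b := chans c' i (dst M b) @ [b])) \<rparr> = ctrl c"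
        by (auto simp: c'_def)
      show "chans \<lparr> ctrl = (ctrl c')(i := ctrl c i),
             chans = (chans c')(i := (chans c' i)(dst M b := chans c' i (dst M b) @ [b])) \<rparr> = chans c"
        using rc chan_of_snoc_send[OF bm pre] Send ib by (simp add: RC_def c'_def)
    qed simp
    ultimately show ?thesis using Send by simp
  next
    case (Recv b)
    have ib: "i = dst M b" using Recv by (simp add: i_def)
    have bm: "b \<in> msgs M" using ma Recv by simp
    have pre2: "prefix (Rc M (src M b) \<tau> @ [b]) (Sc M (src M b) \<tau>)"
      using fifoP_last[OF ff2, of "src M b"] Recv by simp
    define w where "w = drop (Suc (length (Rc M (src M b) \<tau>))) (Sc M (src M b) \<tau>)"
    have cw: "chans c' (src M b) (dst M b) = b # w"
      using chan_of_snoc_recv(1)[OF bm pre2] by (simp add: c'_def w_def)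
    have tr: "(ctrl c' (dst M b), Recv b, ctrl c (dst M b)) \<in> trans (P (dst M b))" using q Recv ib by (simp add: c'_def)
    have "step M P c' (Recv b) \<lparr> ctrl = (ctrl c')(dst M b := ctrl c (dst M b)),
             chans = (chans c')(src M b := (chans c' (src M b))(dst M b := w)) \<rparr>"
      by (rule step.recv) (use bm cw tr in auto)
    moreover have "\<lparr> ctrl = (ctrl c')(dst M b := ctrl c (dst M b)),
             chans = (chans c')(src M b := (chans c' (src M b))(dst M b := w)) \<rparr> = c"
    proof (rule config.equality)
      show "ctrl \<lparr> ctrl = (ctrl c')(dst M b := ctrl c (dst M b)),
             chans = (chans c')(src M b := (chans c' (src M b))(dst M b := w)) \<rparr> = ctrl c"
        using ib by (auto simp: c'_def)
      show "chans \<lparr> ctrl = (ctrl c')(dst M b := ctrl c (dst M b)),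
             chans = (chans c')(src M b := (chans c' (src M b))(dst M b := w)) \<rparr> = chans c"
        using rc chan_of_snoc_recv(2)[OF bm pre2] Recv by (simp add: RC_def c'_def w_def)
    qed simp
    ultimately show ?thesis using Recv by simp
  qed
  show ?thesis using rc' st by blast
qed

theorem run_RC: "run M P (init_config P) \<tau> c \<longleftrightarrow> RC \<tau> c"
proof (induction \<tau> arbitrary: c rule: rev_induct)
  case Nil
  have "run M P (init_config P) [] c \<longleftrightarrow> c = init_config P"
    by (auto intro: run.intros elim: run.cases)
  then show ?case by (simp add: RC_Nil)
next
  case (snoc a \<tau>)
  show ?case
  proof
    assume "run M P (init_config P) (\<tau> @ [a]) c"
    then obtain c' where "run M P (init_config P) \<tau> c'" "step M P c' a c" by (auto simp: run_snoc)
    then show "RC (\<tau> @ [a]) c" using snoc.IH step_RC by blast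
  next
    assume "RC (\<tau> @ [a]) c"
    then obtain c' where "RC \<tau> c'" "step M P c' a c" using RC_snoc_inv by blast
    then show "run M P (init_config P) (\<tau> @ [a]) c" using snoc.IH by (auto simp: run_snoc)
  qed
qed

end


definition bnd :: "'m msgset \<Rightarrow> nat \<Rightarrow> (nat \<Rightarrow> 'm list) \<Rightarrow> 'm action list \<Rightarrow> bool" where
  "bnd M K P0 \<tau> \<longleftrightarrow> (\<forall>n \<le> length \<tau>. \<forall>i. length (P0 i @ Sc M i (take n \<tau>)) \<le> length (Rc M i (take n \<tau>)) + K)"

definition after :: "'m msgset \<Rightarrow> (nat \<Rightarrow> 'm list) \<Rightarrow> 'm action list \<Rightarrow> nat \<Rightarrow> 'm list" where
  "after M P0 A i = drop (length (Rc M i A)) (P0 i @ Sc M i A)"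

lemma all_take_append:
  "(\<forall>n \<le> length (A @ B). Q (take n (A @ B))) \<longleftrightarrow>
   (\<forall>n \<le> length A. Q (take n A)) \<and> (\<forall>n \<le> length B. Q (A @ take n B))"
proof (intro iffI conjI allI impI)
  fix n assume H: "\<forall>n \<le> length (A @ B). Q (take n (A @ B))" and n: "n \<le> length A"
  then show "Q (take n A)" using H[rule_format, of n] by simp
next
  fix n assume H: "\<forall>n \<le> length (A @ B). Q (take n (A @ B))" and n: "n \<le> length B"
  then show "Q (A @ take n B)" using H[rule_format, of "length A + n"] by simp
next
  fix n assume H: "(\<forall>n \<le> length A. Q (take n A)) \<and> (\<forall>n \<le> length B. Q (A @ take n B))"
    and n: "n \<le> length (A @ B)"
  show "Q (take n (A @ B))"
  proof (cases "n \<le> length A")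
    case True then show ?thesis using H by simp
  next
    case False
    then have "take n (A @ B) = A @ take (n - length A) B" by simp
    moreover have "n - length A \<le> length B" using n by simp
    ultimately show ?thesis using H by simp
  qed
qed

lemma prefix_shift: "X @ Y = R @ Z \<Longrightarrow> prefix (R @ U) (X @ Y @ V) \<longleftrightarrow> prefix U (Z @ V)"
proof -
  assume e: "X @ Y = R @ Z"
  have h: "X @ Y @ V = R @ (Z @ V)" using e by (metis append_assoc)
  show ?thesis by (subst h) simp
qed

lemma fifoP_append:
  assumes fa: "fifoP M P0 A"
  shows "fifoP M P0 (A @ B) \<longleftrightarrow> fifoP M (after M P0 A) B"
proof -
  have pre: "prefix (Rc M i A) (P0 i @ Sc M i A)" for i
    using fa unfolding fifoP_def by (metis order_refl take_all)
  then obtain z where z: "\<And>i. P0 i @ Sc M i A = Rc M i A @ z i"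
    unfolding prefix_def by metis
  have af: "after M P0 A i = z i" for i using z[of i] by (simp add: after_def)
  have key: "prefix (Rc M i (A @ t)) (P0 i @ Sc M i (A @ t)) \<longleftrightarrow> prefix (Rc M i t) (after M P0 A i @ Sc M i t)" for i t
    using prefix_shift[OF z[of i], of "Rc M i t" "Sc M i t"] af[of i] by simp
  have "(\<forall>n \<le> length B. \<forall>i. prefix (Rc M i (A @ take n B)) (P0 i @ Sc M i (A @ take n B))) \<longleftrightarrow>
        (\<forall>n \<le> length B. \<forall>i. prefix (Rc M i (take n B)) (after M P0 A i @ Sc M i (take n B)))"
    using key by blast
  then show ?thesis using fa unfolding fifoP_def all_take_append[where Q = "\<lambda>t. \<forall>i. prefix (Rc M i t) (P0 i @ Sc M i t)"]
    by blast
qed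

lemma bnd_append:
  assumes fa: "fifoP M P0 A"
  shows "bnd M K P0 (A @ B) \<longleftrightarrow> bnd M K P0 A \<and> bnd M K (after M P0 A) B"
proof -
  have pre: "prefix (Rc M i A) (P0 i @ Sc M i A)" for i
    using fa unfolding fifoP_def by (metis order_refl take_all)
  then obtain z where z: "\<And>i. P0 i @ Sc M i A = Rc M i A @ z i"
    unfolding prefix_def by metis
  have af: "after M P0 A i = z i" for i using z[of i] by (simp add: after_def)
  have e: "length (P0 i @ Sc M i (A @ t)) = length (Rc M i A) + length (after M P0 A i @ Sc M i t)" for i t
  proof -
    have "length (P0 i @ Sc M i (A @ t)) = length ((P0 i @ Sc M i A) @ Sc M i t)" by simp
    also have "\<dots> = length (Rc M i A @ z i @ Sc M i t)" using z[of i] by simp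
    finally show ?thesis using af[of i] by simp
  qed
  have "(\<forall>n \<le> length B. \<forall>i. length (P0 i @ Sc M i (A @ take n B)) \<le> length (Rc M i (A @ take n B)) + K) \<longleftrightarrow>
        (\<forall>n \<le> length B. \<forall>i. length (after M P0 A i @ Sc M i (take n B)) \<le> length (Rc M i (take n B)) + K)"
  proof -
    have "length (P0 i @ Sc M i (A @ t)) \<le> length (Rc M i (A @ t)) + K \<longleftrightarrow>
          length (after M P0 A i @ Sc M i t) \<le> length (Rc M i t) + K" for i t
      using e[of i t] by (simp only: length_append Rc_simps) arith
    then show ?thesis by blast
  qed
  then show ?thesis unfolding bnd_def all_take_append[where Q = "\<lambda>t. \<forall>i. length (P0 i @ Sc M i t) \<le> length (Rc M i t) + K"]
    by simp
qed

lemma after_append: "fifoP M P0 A \<Longrightarrow> after M P0 (A @ B) = after M (after M P0 A) B"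
proof (intro ext)
  fix i assume fa: "fifoP M P0 A"
  have pre: "prefix (Rc M i A) (P0 i @ Sc M i A)"
    using fa unfolding fifoP_def by (metis order_refl take_all)
  then obtain z where z: "P0 i @ Sc M i A = Rc M i A @ z" unfolding prefix_def by metis
  then have af: "after M P0 A i = z" by (simp add: after_def)
  have h: "P0 i @ Sc M i (A @ B) = Rc M i A @ (z @ Sc M i B)" using z by (metis Sc_simps(2) append_assoc)
  show "after M P0 (A @ B) i = after M (after M P0 A) B i"
    unfolding after_def Rc_simps h using af by (simp add: after_def)
qed

lemma all_take_single: "(\<forall>n \<le> length [x]. Q (take n [x])) \<longleftrightarrow> Q [] \<and> Q [x]"
proof
  assume H: "\<forall>n \<le> length [x]. Q (take n [x])"
  show "Q [] \<and> Q [x]" using H[rule_format, of 0] H[rule_format, of 1] by simp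
next
  assume H: "Q [] \<and> Q [x]"
  show "\<forall>n \<le> length [x]. Q (take n [x])"
  proof (intro allI impI)
    fix n assume "n \<le> length [x]"
    then have "n = 0 \<or> n = 1" by auto
    then show "Q (take n [x])" using H by auto
  qed
qed

lemma fifoP_single: "fifoP M P0 [x] \<longleftrightarrow> (\<forall>i. prefix (Rc M i [x]) (P0 i @ Sc M i [x]))"
  unfolding fifoP_def using all_take_single[where Q = "\<lambda>t. \<forall>i. prefix (Rc M i t) (P0 i @ Sc M i t)"] by simp

lemma bnd_single: "bnd M K P0 [x] \<longleftrightarrow> (\<forall>i. length (P0 i) \<le> K) \<and> (\<forall>i. length (P0 i @ Sc M i [x]) \<le> length (Rc M i [x]) + K)"
  unfolding bnd_def using all_take_single[where Q = "\<lambda>t. \<forall>i. length (P0 i @ Sc M i t) \<le> length (Rc M i t) + K"] by simp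

lemma fifoP_single_send: "fifoP M P0 [Send a]"
  by (simp add: fifoP_single)

lemma after_single_send: "after M P0 [Send a] = P0(src M a := P0 (src M a) @ [a])"
  by (auto simp: after_def)

lemma fifoP_single_recv: "P0 (src M a) = a # r \<Longrightarrow> fifoP M P0 [Recv a]"
  by (simp add: fifoP_single)

lemma after_single_recv: "P0 (src M a) = a # r \<Longrightarrow> after M P0 [Recv a] = P0(src M a := r)"
  by (auto simp: after_def)

lemma bnd_single_send: "bnd M K P0 [Send a] \<longleftrightarrow> (\<forall>i. length (P0 i) \<le> K) \<and> length (P0 (src M a)) + 1 \<le> K"
  unfolding bnd_single by auto

lemma bnd_single_recv: assumes h: "P0 (src M a) = a # r"
  shows "bnd M K P0 [Recv a] \<longleftrightarrow> (\<forall>i. length (P0 i) \<le> K)"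
proof -
  have "(\<forall>i. length (P0 i) \<le> K) \<Longrightarrow> length r \<le> K"
  proof -
    assume A: "\<forall>i. length (P0 i) \<le> K"
    then have "length (P0 (src M a)) \<le> K" by blast
    then show "length r \<le> K" using h by simp
  qed
  then show ?thesis unfolding bnd_single using h by auto
qed

lemma fifoP_pair:
  assumes h: "P0 (src M a) = []"
  shows "fifoP M P0 [Send a, Recv a]" "after M P0 [Send a, Recv a] = P0"
    "(\<forall>i. length (P0 i) \<le> 1) \<Longrightarrow> bnd M 1 P0 [Send a, Recv a]"
proof -
  have f1: "fifoP M P0 [Send a]" by (rule fifoP_single_send)
  have a1: "after M P0 [Send a] = P0(src M a := [a])" using h by (simp add: after_single_send)
  have f2: "fifoP M (after M P0 [Send a]) [Recv a]" using a1 by (simp add: fifoP_single_recv)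
  have a2: "after M (after M P0 [Send a]) [Recv a] = P0" using a1 h
    by (simp add: after_single_recv fun_eq_iff)
  have e: "[Send a, Recv a] = [Send a] @ [Recv a]" by simp
  show "fifoP M P0 [Send a, Recv a]" using iffD2[OF fifoP_append[OF f1] f2] by simp
  show "after M P0 [Send a, Recv a] = P0" using after_append[OF f1, of "[Recv a]"] a2 by simp
  assume l: "\<forall>i. length (P0 i) \<le> 1"
  have b1: "bnd M 1 P0 [Send a]" using l h by (simp add: bnd_single_send)
  have l2: "\<forall>i. length ((P0(src M a := [a])) i) \<le> 1" using l by simp
  have b2: "bnd M 1 (after M P0 [Send a]) [Recv a]" unfolding a1
    using bnd_single_recv[of "P0(src M a := [a])" M a "[]" 1] l2 by simp
  show "bnd M 1 P0 [Send a, Recv a]" using iffD2[OF bnd_append[OF f1] conjI[OF b1 b2]] by simp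
qed

lemma fifoP_sync_acts:
  "(\<forall>a\<in>set w. P0 (src M a) = []) \<Longrightarrow> fifoP M P0 (sync_acts w) \<and> after M P0 (sync_acts w) = P0"
proof (induction w)
  case Nil
  then show ?case by (simp add: fifoP_def after_def)
next
  case (Cons a w)
  have e: "sync_acts (a # w) = [Send a, Recv a] @ sync_acts w" by simp
  have hp: "P0 (src M a) = []" using Cons.prems by simp
  have ih: "fifoP M P0 (sync_acts w) \<and> after M P0 (sync_acts w) = P0" using Cons by simp
  have f12: "fifoP M P0 [Send a, Recv a]" and a12: "after M P0 [Send a, Recv a] = P0"
    using fifoP_pair[of P0 M a, OF hp] by blast+
  have "fifoP M P0 ([Send a, Recv a] @ sync_acts w)"
    using iffD2[OF fifoP_append[OF f12]] a12 ih by simp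
  moreover have "after M P0 ([Send a, Recv a] @ sync_acts w) = P0"
    using after_append[OF f12] a12 ih by simp
  ultimately show ?case unfolding e by blast
qed

lemma bnd_sync_acts:
  "(\<forall>a\<in>set w. P0 (src M a) = []) \<Longrightarrow> (\<forall>i. length (P0 i) \<le> 1) \<Longrightarrow> bnd M 1 P0 (sync_acts w)"
proof (induction w)
  case Nil
  then show ?case by (simp add: bnd_def)
next
  case (Cons a w)
  have e: "sync_acts (a # w) = [Send a, Recv a] @ sync_acts w" by simp
  have hp: "P0 (src M a) = []" using Cons.prems by simp
  have ih: "bnd M 1 P0 (sync_acts w)" using Cons by simp
  have f12: "fifoP M P0 [Send a, Recv a]" and a12: "after M P0 [Send a, Recv a] = P0"
    using fifoP_pair[of P0 M a, OF hp] by blast+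
  have b12: "bnd M 1 P0 [Send a, Recv a]" using fifoP_pair(3)[of P0 M a, OF hp] Cons.prems by blast
  have "bnd M 1 P0 ([Send a, Recv a] @ sync_acts w)"
    using iffD2[OF bnd_append[OF f12]] b12 a12 ih by simp
  then show ?case unfolding e by blast
qed

context ring_sys
begin

definition Ssync :: "'m list \<Rightarrow> bool" where
  "Ssync w \<longleftrightarrow> (\<exists>\<sigma> c. synchronous_trace \<sigma> \<and> run M P (init_config P) \<sigma> c \<and> sends \<sigma> = w)"

lemma synchronous_trace_iff: "synchronous_trace \<sigma> \<longleftrightarrow> \<sigma> = sync_acts (sends \<sigma>)"
proof
  assume "synchronous_trace \<sigma>"
  then obtain as where "\<sigma> = concat (map (\<lambda>a. [Send a, Recv a]) as)" by (auto simp: synchronous_trace_def)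
  then have "\<sigma> = sync_acts as" by (simp add: sync_acts_def)
  then show "\<sigma> = sync_acts (sends \<sigma>)" by simp
next
  assume "\<sigma> = sync_acts (sends \<sigma>)"
  then show "synchronous_trace \<sigma>" unfolding synchronous_trace_def sync_acts_def by blast
qed

lemma synchronous_sync_acts: "synchronous_trace (sync_acts w)"
  by (simp add: synchronous_trace_iff)

lemma msgs_ok_sync_acts: "msgs_ok (sync_acts w) \<longleftrightarrow> (\<forall>a\<in>set w. a \<in> msgs M)"
  by (induction w) auto

lemma chan_of_sync_acts: "chan_of (sync_acts w) = (\<lambda>i j. [])"
proof -
  have "Sc M i (sync_acts w) = Rc M i (sync_acts w)" for i by (induction w) auto
  then show ?thesis by (auto simp: chan_of_def fun_eq_iff)
qed

lemma sync_run_iff: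
  "run M P (init_config P) (sync_acts w) c \<longleftrightarrow>
     (\<forall>a\<in>set w. a \<in> msgs M) \<and> (\<forall>i\<in>{1..N}. lpath (P i) (init (P i)) (proj M i w) (ctrl c i)) \<and>
     (\<forall>i. i \<notin> {1..N} \<longrightarrow> ctrl c i = init (P i)) \<and> chans c = (\<lambda>i j. [])"
  using fifoP_sync_acts[of w "\<lambda>_. []" M]
  by (simp add: run_RC RC_def msgs_ok_sync_acts chan_of_sync_acts proj_def)

lemma Ssync_iff:
  "Ssync w \<longleftrightarrow> (\<forall>a\<in>set w. a \<in> msgs M) \<and> (\<forall>i\<in>{1..N}. \<exists>q. lpath (P i) (init (P i)) (proj M i w) q)"
proof
  assume "Ssync w"
  then obtain \<sigma> c where "synchronous_trace \<sigma>" "run M P (init_config P) \<sigma> c" "sends \<sigma> = w"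
    by (auto simp: Ssync_def)
  then have "run M P (init_config P) (sync_acts w) c" by (metis synchronous_trace_iff)
  then show "(\<forall>a\<in>set w. a \<in> msgs M) \<and> (\<forall>i\<in>{1..N}. \<exists>q. lpath (P i) (init (P i)) (proj M i w) q)"
    by (auto simp: sync_run_iff)
next
  assume H: "(\<forall>a\<in>set w. a \<in> msgs M) \<and> (\<forall>i\<in>{1..N}. \<exists>q. lpath (P i) (init (P i)) (proj M i w) q)"
  define f where "f i = (if i \<in> {1..N} then (SOME q. lpath (P i) (init (P i)) (proj M i w) q) else init (P i))" for i
  have "\<forall>i\<in>{1..N}. lpath (P i) (init (P i)) (proj M i w) (f i)"
    using H by (auto simp: f_def intro: someI_ex)
  then have "run M P (init_config P) (sync_acts w) \<lparr>ctrl = f, chans = (\<lambda>i j. [])\<rparr>"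
    using H by (auto simp: sync_run_iff f_def)
  then show "Ssync w" unfolding Ssync_def using synchronous_sync_acts sends_sync_acts by blast
qed

lemma sent_on_eq: "msgs_ok \<tau> \<Longrightarrow> sent_on M i j \<tau> = (if j = nxt M i then Sc M i \<tau> else [])"
proof (induction \<tau>)
  case (Cons a \<tau>)
  then show ?case
  proof (cases a)
    case (Send b)
    then have "dst M b = nxt M (src M b)" using Cons.prems msg_top by auto
    then show ?thesis using Cons Send by (auto simp: sent_on_def)
  qed (auto simp: sent_on_def)
qed (simp add: sent_on_def)

lemma recv_on_eq: "msgs_ok \<tau> \<Longrightarrow> recv_on M i j \<tau> = (if j = nxt M i then Rc M i \<tau> else [])"
proof (induction \<tau>)
  case (Cons a \<tau>)
  then show ?case
  proof (cases a)
    case (Recv b)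
    then have "dst M b = nxt M (src M b)" using Cons.prems msg_top by auto
    then show ?thesis using Cons Recv by (auto simp: recv_on_def)
  qed (auto simp: recv_on_def)
qed (simp add: recv_on_def)

lemma msgs_ok_take: "msgs_ok \<tau> \<Longrightarrow> msgs_ok (take n \<tau>)"
  by (auto simp: msgs_ok_def dest: in_set_takeD)

lemma bounded_fifo_of:
  assumes m: "msgs_ok \<tau>" and f: "fifoP M (\<lambda>_. []) \<tau>" and b: "bnd M K (\<lambda>_. []) \<tau>"
  shows "bounded_fifo_trace M K \<tau>"
  unfolding bounded_fifo_trace_def
proof (intro allI impI)
  fix n i j assume n: "n \<le> length \<tau>"
  have mt: "msgs_ok (take n \<tau>)" using m msgs_ok_take by blast
  have pre: "prefix (Rc M i (take n \<tau>)) (Sc M i (take n \<tau>))" using f n by (simp add: fifoP_def)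
  then obtain z where z: "Sc M i (take n \<tau>) = Rc M i (take n \<tau>) @ z" by (auto simp: prefix_def)
  have lz: "length z \<le> K" using b n z by (auto simp: bnd_def) (metis add_le_cancel_left length_append)
  show "\<exists>w. is_buf M i j (take n \<tau>) w \<and> length w \<le> K"
  proof (cases "j = nxt M i")
    case True
    then show ?thesis using z lz mt by (auto simp: is_buf_def sent_on_eq recv_on_eq)
  next
    case False
    then show ?thesis using mt by (auto simp: is_buf_def sent_on_eq recv_on_eq)
  qed
qed

end


definition seg :: "'m msgset \<Rightarrow> nat \<Rightarrow> (nat \<Rightarrow> 'm list) \<Rightarrow> 'm action list \<Rightarrow> (nat \<Rightarrow> 'm list) \<Rightarrow> bool" where
  "seg M K P0 A P1 \<longleftrightarrow> fifoP M P0 A \<and> bnd M K P0 A \<and> after M P0 A = P1"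

lemma seg_append: "seg M K P0 A P1 \<Longrightarrow> seg M K P1 B P2 \<Longrightarrow> seg M K P0 (A @ B) P2"
  unfolding seg_def using fifoP_append bnd_append after_append by metis

lemma seg_nil: "(\<forall>i. length (P0 i) \<le> K) \<Longrightarrow> seg M K P0 [] P0"
  by (simp add: seg_def fifoP_def bnd_def after_def fun_eq_iff)

lemma seg_sync: "(\<forall>a\<in>set w. P0 (src M a) = []) \<Longrightarrow> (\<forall>i. length (P0 i) \<le> 1) \<Longrightarrow> seg M 1 P0 (sync_acts w) P0"
  using fifoP_sync_acts bnd_sync_acts by (metis seg_def)

lemma seg_send: "P0 (src M a) = [] \<Longrightarrow> (\<forall>i. length (P0 i) \<le> 1) \<Longrightarrow> seg M 1 P0 [Send a] (P0(src M a := [a]))"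
  unfolding seg_def by (simp add: fifoP_single_send after_single_send bnd_single_send)

lemma seg_recv: "P0 (src M a) = a # r \<Longrightarrow> (\<forall>i. length (P0 i) \<le> 1) \<Longrightarrow> seg M 1 P0 [Recv a] (P0(src M a := r))"
  unfolding seg_def by (simp add: fifoP_single_recv after_single_recv bnd_single_recv)

context ring_sys
begin

lemma chan_of_after: "fifoP M (\<lambda>_. []) \<tau> \<Longrightarrow> chan_of \<tau> = (\<lambda>i j. if j = nxt M i then after M (\<lambda>_. []) \<tau> i else [])"
  by (auto simp: chan_of_def after_def fun_eq_iff)

lemma proj_empty:
  assumes "k \<in> {1..N}" "\<forall>b\<in>set \<beta>. b \<in> msgs M \<and> src M b \<noteq> prv M k \<and> src M b \<noteq> k"
  shows "proj M k \<beta> = []"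
  using assms
proof (induction \<beta>)
  case (Cons b \<beta>)
  then have "dst M b \<noteq> k" using dst_iff by auto
  then show ?case using Cons by auto
qed simp

lemma seg_run:
  assumes s: "seg M 1 (\<lambda>_. []) \<Theta> Pend"
    and m: "msgs_ok \<Theta>"
    and paths: "\<forall>i\<in>{1..N}. lpath (P i) (init (P i)) (loc M i \<Theta>) (f i)"
  shows "run M P (init_config P) \<Theta> \<lparr>ctrl = (\<lambda>i. if i \<in> {1..N} then f i else init (P i)),
            chans = (\<lambda>i j. if j = nxt M i then Pend i else [])\<rparr>"
    and "bounded_fifo_trace M 1 \<Theta>"
proof -
  have ff: "fifoP M (\<lambda>_. []) \<Theta>" and bb: "bnd M 1 (\<lambda>_. []) \<Theta>" and af: "after M (\<lambda>_. []) \<Theta> = Pend"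
    using s by (auto simp: seg_def)
  show "run M P (init_config P) \<Theta> \<lparr>ctrl = (\<lambda>i. if i \<in> {1..N} then f i else init (P i)),
            chans = (\<lambda>i j. if j = nxt M i then Pend i else [])\<rparr>"
    unfolding run_RC RC_def using m ff paths chan_of_after[OF ff] af by auto
  show "bounded_fifo_trace M 1 \<Theta>" using bounded_fifo_of[OF m ff bb] .
qed

lemma loc_sync_acts[simp]: "loc M i (sync_acts w) = proj M i w"
  by (simp add: proj_def)

lemma Ssync_paths: "Ssync w \<Longrightarrow> i \<in> {1..N} \<Longrightarrow> \<exists>q. lpath (P i) (init (P i)) (proj M i w) q"
  by (auto simp: Ssync_iff)

lemma Ssync_msgs: "Ssync w \<Longrightarrow> \<forall>a\<in>set w. a \<in> msgs M"
  by (auto simp: Ssync_iff)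

lemma chain_step:
  assumes k: "k \<in> {1..N}" and pk: "p = prv M k"
    and W: "W = \<alpha> @ [m] @ \<beta> @ [y] @ \<gamma>" and env: "Ssync W"
    and sm: "src M m = p" and sy: "src M y = k"
    and sb: "\<forall>b\<in>set \<beta>. src M b \<noteq> p \<and> src M b \<noteq> k"
    and pth: "lpath (P k) (init (P k)) (proj M k (\<alpha> @ \<beta> @ [y, m] @ \<gamma>) @ \<zeta>) e"
    and z: "\<zeta> = [] \<or> (\<exists>x. \<zeta> = [Send x] \<and> x \<in> msgs M \<and> src M x = k)"
  shows "\<exists>\<Theta> c. run M P (init_config P) \<Theta> c \<and> bounded_fifo_trace M 1 \<Theta> \<and> sends \<Theta> = W @ sends \<zeta>
            \<and> ctrl c k = e \<and> (\<zeta> = [] \<longrightarrow> chans c = (\<lambda>i j. []))"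
proof -
  define E :: "nat \<Rightarrow> 'm list" where "E = (\<lambda>_. [])"
  define E1 where "E1 = E(p := [m])"
  have ms: "\<forall>a\<in>set W. a \<in> msgs M" using Ssync_msgs[OF env] .
  have mm: "m \<in> msgs M" and my: "y \<in> msgs M" and mal: "\<forall>a\<in>set \<alpha>. a \<in> msgs M"
    and mbe: "\<forall>a\<in>set \<beta>. a \<in> msgs M" and mga: "\<forall>a\<in>set \<gamma>. a \<in> msgs M"
    using ms W by auto
  have pr: "p \<in> {1..N}" using pk k prv_range by simp
  have kp: "k \<noteq> p" using prv_neq[OF k] pk by auto
  have dm: "dst M m = k" using dst_iff[OF mm k] sm pk by simp
  have dy: "dst M y \<noteq> k" using msg_top[OF my] sy nxt_neq[OF k] by simp
  define \<Theta> where "\<Theta> = sync_acts \<alpha> @ [Send m] @ sync_acts \<beta> @ [Send y, Recv y, Recv m] @ sync_acts \<gamma> @ \<zeta>"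
  define Pend where "Pend = (if \<zeta> = [] then E else E(k := sends \<zeta>))"
  have l1: "\<forall>i. length (E i) \<le> 1" by (simp add: E_def)
  have l2: "\<forall>i. length (E1 i) \<le> 1" by (simp add: E1_def E_def)
  have l3: "\<forall>i. length ((E1(k := [y])) i) \<le> 1" by (simp add: E1_def E_def)
  have s1: "seg M 1 E (sync_acts \<alpha>) E" by (rule seg_sync) (auto simp: E_def l1)
  have s2: "seg M 1 E [Send m] E1" using seg_send[of E M m] l1 sm by (simp add: E1_def E_def)
  have s3: "seg M 1 E1 (sync_acts \<beta>) E1" by (rule seg_sync) (use sb l2 in \<open>auto simp: E1_def E_def\<close>)
  have s4: "seg M 1 E1 [Send y] (E1(k := [y]))" using seg_send[of E1 M y] l2 sy kp by (simp add: E1_def E_def)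
  have s5: "seg M 1 (E1(k := [y])) [Recv y] E1"
  proof -
    have "seg M 1 (E1(k := [y])) [Recv y] ((E1(k := [y]))(src M y := []))"
      using seg_recv[of "E1(k := [y])" M y "[]"] l3 sy by simp
    moreover have "(E1(k := [y]))(src M y := []) = E1" using sy kp by (auto simp: E1_def E_def fun_eq_iff)
    ultimately show ?thesis by simp
  qed
  have s6: "seg M 1 E1 [Recv m] E"
  proof -
    have "seg M 1 E1 [Recv m] (E1(src M m := []))"
      using seg_recv[of E1 M m "[]"] l2 sm by (simp add: E1_def)
    moreover have "E1(src M m := []) = E" using sm by (auto simp: E1_def E_def fun_eq_iff)
    ultimately show ?thesis by simp
  qed
  have s7: "seg M 1 E (sync_acts \<gamma>) E" by (rule seg_sync) (auto simp: E_def l1)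
  have s8: "seg M 1 E \<zeta> Pend"
  proof (cases "\<zeta> = []")
    case True then show ?thesis using seg_nil[OF l1] by (simp add: Pend_def)
  next
    case False
    then obtain x where x: "\<zeta> = [Send x]" "src M x = k" using z by auto
    have "seg M 1 E [Send x] (E(src M x := [x]))" using seg_send[of E M x] l1 by (simp add: E_def)
    then show ?thesis using x by (simp add: Pend_def)
  qed
  have sAll: "seg M 1 E \<Theta> Pend"
  proof -
    have a: "seg M 1 E1 [Send y, Recv y, Recv m] E"
      using seg_append[OF s4 seg_append[OF s5 s6]] by simp
    have b: "seg M 1 E (sync_acts \<gamma> @ \<zeta>) Pend" using seg_append[OF s7 s8] .
    have c: "seg M 1 E1 ([Send y, Recv y, Recv m] @ sync_acts \<gamma> @ \<zeta>) Pend" using seg_append[OF a b] .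
    have d: "seg M 1 E1 (sync_acts \<beta> @ [Send y, Recv y, Recv m] @ sync_acts \<gamma> @ \<zeta>) Pend" using seg_append[OF s3 c] .
    have e: "seg M 1 E ([Send m] @ sync_acts \<beta> @ [Send y, Recv y, Recv m] @ sync_acts \<gamma> @ \<zeta>) Pend"
      using seg_append[OF s2 d] .
    show ?thesis unfolding \<Theta>_def using seg_append[OF s1 e] .
  qed
  have zmsg: "msgs_ok \<zeta>" using z by auto
  have mok: "msgs_ok \<Theta>" using mal mbe mga mm my zmsg by (simp add: \<Theta>_def msgs_ok_sync_acts)
  have zloc: "loc M i \<zeta> = (if i = k then \<zeta> else [])" for i using z by auto
  have pbk: "proj M k \<beta> = []" using proj_empty[OF k] sb mbe pk by auto
  define f where "f i = (if i = k then e else SOME q. lpath (P i) (init (P i)) (proj M i W) q)" for i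
  have paths: "\<forall>i\<in>{1..N}. lpath (P i) (init (P i)) (loc M i \<Theta>) (f i)"
  proof
    fix i assume i: "i \<in> {1..N}"
    show "lpath (P i) (init (P i)) (loc M i \<Theta>) (f i)"
    proof (cases "i = k")
      case True
      have "loc M k \<Theta> = proj M k (\<alpha> @ \<beta> @ [y, m] @ \<gamma>) @ \<zeta>"
        using sm kp dm dy sy pbk zloc by (simp add: \<Theta>_def)
      then show ?thesis using pth True by (simp add: f_def)
    next
      case False
      have "loc M i \<Theta> = proj M i W"
        using False sm dm sy zloc by (simp add: \<Theta>_def W)
      moreover have "lpath (P i) (init (P i)) (proj M i W) (f i)"
        using Ssync_paths[OF env i] False by (auto simp: f_def intro: someI_ex)
      ultimately show ?thesis by simp
    qed
  qed
  have sAll': "seg M 1 (\<lambda>_. []) \<Theta> Pend" using sAll by (simp add: E_def)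
  note R = seg_run[OF sAll' mok paths]
  let ?c = "\<lparr>ctrl = (\<lambda>i. if i \<in> {1..N} then f i else init (P i)), chans = (\<lambda>i j. if j = nxt M i then Pend i else [])\<rparr>"
  have "sends \<Theta> = W @ sends \<zeta>" by (simp add: \<Theta>_def W)
  moreover have "ctrl ?c k = e" using k by (simp add: f_def)
  moreover have "\<zeta> = [] \<longrightarrow> chans ?c = (\<lambda>i j. [])" by (simp add: Pend_def E_def fun_eq_iff)
  ultimately show ?thesis using R by blast
qed

end


context ring_sys
begin

lemma stepA_constr:
  assumes k: "k \<in> {1..N}" and pk: "p = prv M k"
    and W: "W = \<alpha> @ [m] @ \<gamma>" and env: "Ssync W"
    and sm: "src M m = p"
    and sb: "\<forall>b\<in>set \<gamma>. src M b \<noteq> p"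
    and x: "x \<in> msgs M" "src M x = k"
    and pth: "lpath (P k) (init (P k)) (proj M k (\<alpha> @ \<gamma>) @ [Send x]) e"
  shows "\<exists>\<Theta> c. run M P (init_config P) \<Theta> c \<and> bounded_fifo_trace M 1 \<Theta> \<and> sends \<Theta> = W @ [x]"
proof -
  define E :: "nat \<Rightarrow> 'm list" where "E = (\<lambda>_. [])"
  define E1 where "E1 = E(p := [m])"
  have ms: "\<forall>a\<in>set W. a \<in> msgs M" using Ssync_msgs[OF env] .
  have mm: "m \<in> msgs M" and mal: "\<forall>a\<in>set \<alpha>. a \<in> msgs M"
    and mga: "\<forall>a\<in>set \<gamma>. a \<in> msgs M"
    using ms W by auto
  have kp: "k \<noteq> p" using prv_neq[OF k] pk by auto
  have dm: "dst M m = k" using dst_iff[OF mm k] sm pk by simp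
  have dx: "dst M x \<noteq> k" using msg_top[OF x(1)] x(2) nxt_neq[OF k] by simp
  define \<Theta> where "\<Theta> = sync_acts \<alpha> @ [Send m] @ sync_acts \<gamma> @ [Send x]"
  have l1: "\<forall>i. length (E i) \<le> 1" by (simp add: E_def)
  have l2: "\<forall>i. length (E1 i) \<le> 1" by (simp add: E1_def E_def)
  have s1: "seg M 1 E (sync_acts \<alpha>) E" by (rule seg_sync) (auto simp: E_def l1)
  have s2: "seg M 1 E [Send m] E1" using seg_send[of E M m] l1 sm by (simp add: E1_def E_def)
  have s3: "seg M 1 E1 (sync_acts \<gamma>) E1" by (rule seg_sync) (use sb l2 in \<open>auto simp: E1_def E_def\<close>)
  have s4: "seg M 1 E1 [Send x] (E1(k := [x]))" using seg_send[of E1 M x] l2 x kp by (simp add: E1_def E_def)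
  have sAll: "seg M 1 (\<lambda>_. []) \<Theta> (E1(k := [x]))"
    unfolding \<Theta>_def using seg_append[OF s1 seg_append[OF s2 seg_append[OF s3 s4]]] by (simp add: E_def)
  have mok: "msgs_ok \<Theta>" using mal mga mm x by (simp add: \<Theta>_def msgs_ok_sync_acts)
  define f where "f i = (if i = k then e else SOME q. lpath (P i) (init (P i)) (proj M i W) q)" for i
  have paths: "\<forall>i\<in>{1..N}. lpath (P i) (init (P i)) (loc M i \<Theta>) (f i)"
  proof
    fix i assume i: "i \<in> {1..N}"
    show "lpath (P i) (init (P i)) (loc M i \<Theta>) (f i)"
    proof (cases "i = k")
      case True
      have "loc M k \<Theta> = proj M k (\<alpha> @ \<gamma>) @ [Send x]"
        using sm kp dm x by (simp add: \<Theta>_def)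
      then show ?thesis using pth True by (simp add: f_def)
    next
      case False
      have "loc M i \<Theta> = proj M i W"
        using False sm dm x by (simp add: \<Theta>_def W)
      moreover have "lpath (P i) (init (P i)) (proj M i W) (f i)"
        using Ssync_paths[OF env i] False by (auto simp: f_def intro: someI_ex)
      ultimately show ?thesis by simp
    qed
  qed
  note R = seg_run[OF sAll mok paths]
  have "sends \<Theta> = W @ [x]" by (simp add: \<Theta>_def W)
  then show ?thesis using R by blast
qed

lemma sync_send_constr:
  assumes k: "k \<in> {1..N}" and env: "Ssync W"
    and x: "x \<in> msgs M" "src M x = k"
    and pth: "lpath (P k) (init (P k)) (proj M k W @ [Send x]) e"
  shows "\<exists>\<Theta> c. run M P (init_config P) \<Theta> c \<and> bounded_fifo_trace M 1 \<Theta> \<and> sends \<Theta> = W @ [x]"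
proof -
  define E :: "nat \<Rightarrow> 'm list" where "E = (\<lambda>_. [])"
  have ms: "\<forall>a\<in>set W. a \<in> msgs M" using Ssync_msgs[OF env] .
  have dx: "dst M x \<noteq> k" using msg_top[OF x(1)] x(2) nxt_neq[OF k] by simp
  define \<Theta> where "\<Theta> = sync_acts W @ [Send x]"
  have l1: "\<forall>i. length (E i) \<le> 1" by (simp add: E_def)
  have s1: "seg M 1 E (sync_acts W) E" by (rule seg_sync) (auto simp: E_def l1)
  have s4: "seg M 1 E [Send x] (E(k := [x]))" using seg_send[of E M x] l1 x by (simp add: E_def)
  have sAll: "seg M 1 (\<lambda>_. []) \<Theta> (E(k := [x]))"
    unfolding \<Theta>_def using seg_append[OF s1 s4] by (simp add: E_def)
  have mok: "msgs_ok \<Theta>" using ms x by (simp add: \<Theta>_def msgs_ok_sync_acts)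
  define f where "f i = (if i = k then e else SOME q. lpath (P i) (init (P i)) (proj M i W) q)" for i
  have paths: "\<forall>i\<in>{1..N}. lpath (P i) (init (P i)) (loc M i \<Theta>) (f i)"
  proof
    fix i assume i: "i \<in> {1..N}"
    show "lpath (P i) (init (P i)) (loc M i \<Theta>) (f i)"
    proof (cases "i = k")
      case True
      have "loc M k \<Theta> = proj M k W @ [Send x]" using x by (simp add: \<Theta>_def)
      then show ?thesis using pth True by (simp add: f_def)
    next
      case False
      have "loc M i \<Theta> = proj M i W" using False x by (simp add: \<Theta>_def)
      moreover have "lpath (P i) (init (P i)) (proj M i W) (f i)"
        using Ssync_paths[OF env i] False by (auto simp: f_def intro: someI_ex)
      ultimately show ?thesis by simp
    qed
  qed
  note R = seg_run[OF sAll mok paths]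
  have "sends \<Theta> = W @ [x]" by (simp add: \<Theta>_def)
  then show ?thesis using R by blast
qed

end

locale ring_os = ring_sys M P for M :: "'m msgset" and P :: "nat \<Rightarrow> ('s, 'm) peer" +
  assumes os: "one_synchronizable M P"
begin

lemma os_inl:
  assumes r: "run M P (init_config P) \<Theta> c" and b: "bounded_fifo_trace M 1 \<Theta>"
  shows "Ssync (sends \<Theta>)"
proof -
  have "\<Theta> \<in> traces M P 1" using r b by (auto simp: traces_def)
  then have "Inl (sends \<Theta>) \<in> ST M P 1" by (auto simp: ST_def send_traces_def)
  then have "Inl (sends \<Theta>) \<in> ST M P 0" using os by (simp add: one_synchronizable_def)
  then obtain \<sigma> where "\<sigma> \<in> traces M P 0" "sends \<sigma> = sends \<Theta>" by (auto simp: ST_def send_traces_def)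
  then show ?thesis by (auto simp: traces_def Ssync_def)
qed

lemma os_inr:
  assumes r: "run M P (init_config P) \<Theta> c" and b: "bounded_fifo_trace M 1 \<Theta>"
    and st: "chans c = (\<lambda>i j. [])"
  shows "\<forall>i\<in>{1..N}. lpath (P i) (init (P i)) (proj M i (sends \<Theta>)) (ctrl c i)"
proof -
  have "\<Theta> \<in> traces M P 1" using r b by (auto simp: traces_def)
  moreover have "stable c" using st by (simp add: stable_def)
  ultimately have "Inr (sends \<Theta>, c) \<in> ST M P 1" using r by (auto simp: ST_def send_traces_def)
  then have "Inr (sends \<Theta>, c) \<in> ST M P 0" using os by (simp add: one_synchronizable_def)
  then obtain \<sigma> where s: "\<sigma> \<in> traces M P 0" "sends \<sigma> = sends \<Theta>" "run M P (init_config P) \<sigma> c"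
    by (auto simp: ST_def send_traces_def)
  then have "synchronous_trace \<sigma>" by (simp add: traces_def)
  then have "run M P (init_config P) (sync_acts (sends \<Theta>)) c" using s by (metis synchronous_trace_iff)
  then show ?thesis by (simp add: sync_run_iff)
qed

end


lemma take_filter_ex:
  "n \<le> length (filter Q xs) \<Longrightarrow> \<exists>n'. n' \<le> length xs \<and> take n (filter Q xs) = filter Q (take n' xs)"
proof (induction xs arbitrary: n)
  case Nil then show ?case by simp
next
  case (Cons x xs)
  show ?case
  proof (cases "Q x")
    case True
    show ?thesis
    proof (cases n)
      case 0 then show ?thesis by (intro exI[of _ 0]) simp
    next
      case (Suc n1)
      then have "n1 \<le> length (filter Q xs)" using Cons.prems True by simp
      then obtain n' where "n' \<le> length xs" "take n1 (filter Q xs) = filter Q (take n' xs)" using Cons.IH by blast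
      then show ?thesis using Suc True by (intro exI[of _ "Suc n'"]) simp
    qed
  next
    case False
    then have "n \<le> length (filter Q xs)" using Cons.prems by simp
    then obtain n' where "n' \<le> length xs" "take n (filter Q xs) = filter Q (take n' xs)" using Cons.IH by blast
    then show ?thesis using False by (intro exI[of _ "Suc n'"]) simp
  qed
qed

lemma Sc_filter_actor: "Sc M i (filter (\<lambda>a. actor M a \<noteq> p) \<rho>) = (if i = p then [] else Sc M i \<rho>)"
proof (induction \<rho>)
  case (Cons a \<rho>) then show ?case by (cases a) auto
qed simp

lemma Sc_filter_actor_eq: "Sc M i (filter (\<lambda>a. actor M a = p) \<rho>) = (if i = p then Sc M i \<rho> else [])"
proof (induction \<rho>)
  case (Cons a \<rho>) then show ?case by (cases a) auto
qed simp

lemma Sc_recv_only: "\<forall>act\<in>set \<rho>. \<exists>a. act = Recv a \<and> src M a = c \<Longrightarrow> Sc M i \<rho> = []"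
  by (induction \<rho>) auto

lemma fifoP_prefix: "fifoP M P0 (A @ B) \<Longrightarrow> fifoP M P0 A"
  unfolding fifoP_def by (metis le_add1 length_append order_trans take_append append_Nil2 diff_is_0_eq' take0)

lemma prefix_take_Rc: "prefix (Rc M i (take n \<rho>)) (Rc M i \<rho>)"
proof -
  have "Rc M i \<rho> = Rc M i (take n \<rho>) @ Rc M i (drop n \<rho>)" by (metis Rc_simps(2) append_take_drop_id)
  then show ?thesis by (simp add: prefix_def)
qed

lemma prefix_take_Sc: "prefix (Sc M i (take n \<rho>)) (Sc M i \<rho>)"
proof -
  have "Sc M i \<rho> = Sc M i (take n \<rho>) @ Sc M i (drop n \<rho>)" by (metis Sc_simps(2) append_take_drop_id)
  then show ?thesis by (simp add: prefix_def)
qed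

context ring_sys
begin

lemma Rc_filter_actor: "msgs_ok \<rho> \<Longrightarrow> Rc M i (filter (\<lambda>a. actor M a \<noteq> p) \<rho>) = (if nxt M i = p then [] else Rc M i \<rho>)"
proof (induction \<rho>)
  case (Cons a \<rho>)
  then show ?case
  proof (cases a)
    case (Recv b)
    then have "dst M b = nxt M (src M b)" using Cons.prems msg_top by auto
    then show ?thesis using Cons Recv by auto
  qed auto
qed simp

lemma Rc_filter_actor_eq: "msgs_ok \<rho> \<Longrightarrow> Rc M i (filter (\<lambda>a. actor M a = p) \<rho>) = (if nxt M i = p then Rc M i \<rho> else [])"
proof (induction \<rho>)
  case (Cons a \<rho>)
  then show ?case
  proof (cases a)
    case (Recv b)
    then have "dst M b = nxt M (src M b)" using Cons.prems msg_top by auto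
    then show ?thesis using Cons Recv by auto
  qed auto
qed simp

lemma msgs_ok_filter: "msgs_ok \<rho> \<Longrightarrow> msgs_ok (filter Q \<rho>)"
  by (auto simp: msgs_ok_def)

lemma fifoP_filter_out:
  assumes f: "fifoP M Q \<rho>" and m: "msgs_ok \<rho>" and pp: "p \<in> {1..N}"
    and q0: "prefix Q0 (Q p)" and cnt: "length (Rc M p \<rho>) \<le> length Q0"
  shows "fifoP M (Q(p := Q0)) (filter (\<lambda>a. actor M a \<noteq> p) \<rho>)"
  unfolding fifoP_def
proof (intro allI impI)
  fix n i assume n: "n \<le> length (filter (\<lambda>a. actor M a \<noteq> p) \<rho>)"
  obtain n' where n': "n' \<le> length \<rho>" "take n (filter (\<lambda>a. actor M a \<noteq> p) \<rho>) = filter (\<lambda>a. actor M a \<noteq> p) (take n' \<rho>)"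
    using take_filter_ex[OF n] by blast
  have mt: "msgs_ok (take n' \<rho>)" using m msgs_ok_take by blast
  have fi: "prefix (Rc M i (take n' \<rho>)) (Q i @ Sc M i (take n' \<rho>))" using f n' by (simp add: fifoP_def)
  have pnp: "nxt M p \<noteq> p" using nxt_neq[OF pp] .
  show "prefix (Rc M i (take n (filter (\<lambda>a. actor M a \<noteq> p) \<rho>))) ((Q(p := Q0)) i @ Sc M i (take n (filter (\<lambda>a. actor M a \<noteq> p) \<rho>)))"
  proof (cases "nxt M i = p")
    case True
    then show ?thesis using n' Rc_filter_actor[OF mt] by simp
  next
    case False
    show ?thesis
    proof (cases "i = p")
      case True
      have a: "prefix (Rc M p (take n' \<rho>)) (Q p @ Sc M p (take n' \<rho>))" using fi True by simp
      have b: "prefix Q0 (Q p @ Sc M p (take n' \<rho>))" using q0 by (metis prefix_prefix)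
      have c: "length (Rc M p (take n' \<rho>)) \<le> length Q0"
        using cnt prefix_length_le[OF prefix_take_Rc[of M p n' \<rho>]] by simp
      have "prefix (Rc M p (take n' \<rho>)) Q0" using prefix_length_prefix[OF a b c] .
      then show ?thesis using True n' Rc_filter_actor[OF mt] Sc_filter_actor[of M p p "take n' \<rho>"] pnp by simp
    next
      case False2: False
      then show ?thesis using False n' Rc_filter_actor[OF mt] Sc_filter_actor[of M i p "take n' \<rho>"] fi by simp
    qed
  qed
qed

lemma fifoP_recv_only:
  assumes B: "\<forall>act\<in>set B. \<exists>a. act = Recv a \<and> src M a = c" and pre: "prefix (Rc M c B) (R c)"
  shows "fifoP M R B"
  unfolding fifoP_def
proof (intro allI impI)
  fix n i assume n: "n \<le> length B"
  have bt: "\<forall>act\<in>set (take n B). \<exists>a. act = Recv a \<and> src M a = c" using B by (auto dest: in_set_takeD)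
  have sc: "Sc M i (take n B) = []" using Sc_recv_only[OF bt] .
  have "\<forall>act\<in>set \<rho>. \<exists>a. act = Recv a \<and> src M a = c \<Longrightarrow> Rc M i \<rho> = (if i = c then Rc M c \<rho> else [])" for \<rho>
    by (induction \<rho>) auto
  then have rc: "Rc M i (take n B) = (if i = c then Rc M c (take n B) else [])" using bt by blast
  have "prefix (Rc M c (take n B)) (R c)" using prefix_take_Rc pre prefix_order.trans by blast
  then show "prefix (Rc M i (take n B)) (R i @ Sc M i (take n B))" using sc rc by simp
qed

end


lemma loc_filter_ne: "loc M i (filter (\<lambda>a. actor M a \<noteq> p) \<rho>) = (if i = p then [] else loc M i \<rho>)"
  by (induction \<rho>) auto

lemma loc_filter_eq: "loc M i (filter (\<lambda>a. actor M a = p) \<rho>) = (if i = p then loc M i \<rho> else [])"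
  by (induction \<rho>) auto

lemma Sc_no: "(\<forall>a. Send a \<in> set \<rho> \<longrightarrow> src M a \<noteq> i) \<Longrightarrow> Sc M i \<rho> = []"
proof (induction \<rho>)
  case (Cons x \<rho>) then show ?case by (cases x) auto
qed simp

lemma fifoP_sends_only: "\<forall>act\<in>set X. \<exists>a. act = Send a \<Longrightarrow> fifoP M R X"
proof -
  assume h: "\<forall>act\<in>set X. \<exists>a. act = Send a"
  have "\<forall>act\<in>set \<rho>. \<exists>a. act = Send a \<Longrightarrow> Rc M i \<rho> = []" for \<rho> i
    by (induction \<rho>) auto
  moreover have "\<forall>act\<in>set (take n X). \<exists>a. act = Send a" for n using h by (auto dest: in_set_takeD)
  ultimately show ?thesis by (simp add: fifoP_def)
qed

lemma prefix_drop_app: "prefix (xs @ ys) zs \<Longrightarrow> prefix ys (drop (length xs) zs)"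
  by (auto simp: prefix_def)

lemma fifoP_mid: "fifoP M P0 (A @ B @ C) \<Longrightarrow> fifoP M (after M P0 A) B"
proof -
  assume h: "fifoP M P0 (A @ B @ C)"
  have fa: "fifoP M P0 A" using fifoP_prefix h by blast
  have "fifoP M (after M P0 A) (B @ C)" using fifoP_append[OF fa] h by blast
  then show ?thesis using fifoP_prefix by blast
qed

context ring_sys
begin

lemma msgs_ok_fset: "msgs_ok \<rho> \<Longrightarrow> set \<rho>' \<subseteq> set \<rho> \<Longrightarrow> msgs_ok \<rho>'"
  by (auto simp: msgs_ok_def)

lemma after_E: "after M (\<lambda>_. []) X i = drop (length (Rc M i X)) (Sc M i X)"
  by (simp add: after_def)

lemma del_run:
  assumes r: "run M P (init_config P) (\<rho>1 @ [Send m] @ \<rho>2) c"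
    and sm: "src M m = p" and cnt: "length (Rc M p (\<rho>1 @ \<rho>2)) \<le> length (Sc M p \<rho>1)"
  shows "\<exists>c'. run M P (init_config P) (\<rho>1 @ filter (\<lambda>a. actor M a \<noteq> p) \<rho>2) c'"
proof -
  define E :: "nat \<Rightarrow> 'm list" where "E = (\<lambda>_. [])"
  let ?\<tau> = "\<rho>1 @ [Send m] @ \<rho>2"
  let ?A = "filter (\<lambda>a. actor M a \<noteq> p) \<rho>2"
  have rc: "RC ?\<tau> c" using r run_RC by blast
  have mok: "msgs_ok ?\<tau>" and ff: "fifoP M E ?\<tau>" using rc by (auto simp: RC_def E_def)
  have mm: "m \<in> msgs M" using mok by simp
  have pp: "p \<in> {1..N}" using msg_top[OF mm] sm by simp
  have m2: "msgs_ok \<rho>2" using mok by simp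
  have f1: "fifoP M E \<rho>1" using fifoP_prefix ff by blast
  define Q where "Q = after M E \<rho>1"
  have aQ: "after M Q [Send m] = Q(p := Q p @ [m])" using sm by (simp add: after_single_send)
  have f2: "fifoP M (Q(p := Q p @ [m])) \<rho>2"
  proof -
    have "fifoP M (after M E (\<rho>1 @ [Send m])) \<rho>2" using fifoP_mid[of M E "\<rho>1 @ [Send m]" \<rho>2 "[]"] ff by simp
    moreover have "after M E (\<rho>1 @ [Send m]) = after M Q [Send m]" using after_append[OF f1] by (simp add: Q_def)
    ultimately show ?thesis using aQ by simp
  qed
  have Qp: "Q p = drop (length (Rc M p \<rho>1)) (Sc M p \<rho>1)" by (simp add: Q_def E_def after_def)
  have cnt2: "length (Rc M p \<rho>2) \<le> length (Q p)" using cnt Qp by simp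
  have fA: "fifoP M ((Q(p := Q p @ [m]))(p := Q p)) ?A"
    by (rule fifoP_filter_out[OF f2 m2 pp]) (use cnt2 in auto)
  then have fA': "fifoP M Q ?A" by simp
  have fall: "fifoP M E (\<rho>1 @ ?A)" using fifoP_append[OF f1] fA' by (simp add: Q_def)
  define g where "g i = (if i = p then (SOME q. lpath (P p) (init (P p)) (loc M p \<rho>1) q) else ctrl c i)" for i
  have paths: "\<forall>i\<in>{1..N}. lpath (P i) (init (P i)) (loc M i (\<rho>1 @ ?A)) (g i)"
  proof
    fix i assume i: "i \<in> {1..N}"
    have pi: "lpath (P i) (init (P i)) (loc M i ?\<tau>) (ctrl c i)" using rc i by (simp add: RC_def)
    show "lpath (P i) (init (P i)) (loc M i (\<rho>1 @ ?A)) (g i)"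
    proof (cases "i = p")
      case True
      have "lpath (P p) (init (P p)) (loc M p \<rho>1 @ (loc M p ([Send m] @ \<rho>2))) (ctrl c p)"
        using pi True by simp
      then have "\<exists>q. lpath (P p) (init (P p)) (loc M p \<rho>1) q" by (rule lpath_prefix)
      then show ?thesis using True by (simp add: g_def loc_filter_ne someI_ex)
    next
      case False
      then show ?thesis using pi sm by (simp add: g_def loc_filter_ne)
    qed
  qed
  have outs: "\<forall>i. i \<notin> {1..N} \<longrightarrow> g i = init (P i)" using rc pp by (auto simp: RC_def g_def)
  have mok2: "msgs_ok (\<rho>1 @ ?A)" using mok by (auto simp: msgs_ok_def)
  have "RC (\<rho>1 @ ?A) \<lparr>ctrl = g, chans = chan_of (\<rho>1 @ ?A)\<rparr>"
    using mok2 fall paths outs by (simp add: RC_def E_def)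
  then show ?thesis using run_RC by blast
qed

lemma nm_run:
  assumes r: "run M P (init_config P) (\<tau>1 @ [Send m] @ \<tau>2 @ [Send y] @ \<tau>3) c"
    and sm: "src M m = p" and sy: "src M y = nxt M p"
    and nos: "\<forall>a. Send a \<in> set \<tau>2 \<longrightarrow> src M a \<noteq> p \<and> src M a \<noteq> nxt M p"
    and cnt: "length (Rc M p (\<tau>1 @ \<tau>2)) \<le> length (Sc M p \<tau>1)"
  shows "run M P (init_config P) (\<tau>1 @ filter (\<lambda>a. actor M a \<noteq> p) \<tau>2 @ [Send y, Send m] @ filter (\<lambda>a. actor M a = p) \<tau>2 @ \<tau>3) c"
proof -
  define E :: "nat \<Rightarrow> 'm list" where "E = (\<lambda>_. [])"
  let ?\<tau> = "\<tau>1 @ [Send m] @ \<tau>2 @ [Send y] @ \<tau>3"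
  let ?A = "filter (\<lambda>a. actor M a \<noteq> p) \<tau>2"
  let ?B = "filter (\<lambda>a. actor M a = p) \<tau>2"
  let ?\<tau>' = "\<tau>1 @ ?A @ [Send y, Send m] @ ?B @ \<tau>3"
  have rc: "RC ?\<tau> c" using r run_RC by blast
  have mok: "msgs_ok ?\<tau>" and ff: "fifoP M E ?\<tau>" using rc by (auto simp: RC_def E_def)
  have mm: "m \<in> msgs M" using mok by simp
  have pp: "p \<in> {1..N}" using msg_top[OF mm] sm by simp
  have ppn: "prv M p \<noteq> p" using prv_neq[OF pp] .
  have npp: "nxt M p \<noteq> p" using nxt_neq[OF pp] .
  have m2: "msgs_ok \<tau>2" using mok by simp
  have Sp2: "Sc M p \<tau>2 = []" using nos by (intro Sc_no) auto
  have Sk2: "Sc M (nxt M p) \<tau>2 = []" using nos by (intro Sc_no) auto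
  have ScA: "Sc M i ?A = (if i = p then [] else Sc M i \<tau>2)" for i by (rule Sc_filter_actor)
  have ScB: "Sc M i ?B = []" for i using Sc_filter_actor_eq[of M i p \<tau>2] Sp2 by auto
  have RcA: "Rc M i ?A = (if nxt M i = p then [] else Rc M i \<tau>2)" for i using Rc_filter_actor[OF m2] .
  have RcB: "Rc M i ?B = (if nxt M i = p then Rc M i \<tau>2 else [])" for i using Rc_filter_actor_eq[OF m2] .
  have Sceq: "Sc M i ?\<tau>' = Sc M i ?\<tau>" for i
    using ScA[of i] ScB[of i] Sp2 Sk2 sm sy npp by auto
  have Rceq: "Rc M i ?\<tau>' = Rc M i ?\<tau>" for i
    using RcA[of i] RcB[of i] by auto
  have loceq: "loc M i ?\<tau>' = loc M i ?\<tau>" for i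
    using sm sy npp by (auto simp: loc_filter_ne loc_filter_eq)
  have mok': "msgs_ok ?\<tau>'" using mok by (auto simp: msgs_ok_def)
  have f1: "fifoP M E \<tau>1" using fifoP_prefix ff by blast
  define Q where "Q = after M E \<tau>1"
  have f2: "fifoP M (Q(p := Q p @ [m])) \<tau>2"
  proof -
    have "fifoP M (after M E (\<tau>1 @ [Send m])) \<tau>2" using fifoP_mid[of M E "\<tau>1 @ [Send m]" \<tau>2 "[Send y] @ \<tau>3"] ff by simp
    moreover have "after M E (\<tau>1 @ [Send m]) = after M Q [Send m]" using after_append[OF f1] by (simp add: Q_def)
    ultimately show ?thesis using sm by (simp add: after_single_send)
  qed
  have Qp: "Q p = drop (length (Rc M p \<tau>1)) (Sc M p \<tau>1)" by (simp add: Q_def E_def after_def)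
  have cnt2: "length (Rc M p \<tau>2) \<le> length (Q p)" using cnt Qp by simp
  have fA: "fifoP M ((Q(p := Q p @ [m]))(p := Q p)) ?A"
    by (rule fifoP_filter_out[OF f2 m2 pp]) (use cnt2 in auto)
  then have fA': "fifoP M Q ?A" by simp
  have fX1: "fifoP M E (\<tau>1 @ ?A)" using fifoP_append[OF f1] fA' by (simp add: Q_def)
  have fX0: "fifoP M E ((\<tau>1 @ ?A) @ [Send y, Send m])"
    using fifoP_append[OF fX1] fifoP_sends_only[of "[Send y, Send m]"] by auto
  let ?X0 = "(\<tau>1 @ ?A) @ [Send y, Send m]"
  have fB: "fifoP M (after M E ?X0) ?B"
  proof (rule fifoP_recv_only[where c = "prv M p"])
    show "\<forall>act\<in>set ?B. \<exists>a. act = Recv a \<and> src M a = prv M p"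
    proof
      fix act assume a: "act \<in> set ?B"
      then have act: "act \<in> set \<tau>2" "actor M act = p" by auto
      show "\<exists>a. act = Recv a \<and> src M a = prv M p"
      proof (cases act)
        case (Send b) then show ?thesis using act nos by auto
      next
        case (Recv b)
        have "b \<in> msgs M" using m2 act Recv by (auto simp: msgs_ok_def)
        then show ?thesis using Recv act dst_iff pp by auto
      qed
    qed
    have pre0: "prefix (Rc M (prv M p) (\<tau>1 @ [Send m] @ \<tau>2)) (Sc M (prv M p) (\<tau>1 @ [Send m] @ \<tau>2))"
      using fifoP_last[OF fifoP_prefix[of M E "\<tau>1 @ [Send m] @ \<tau>2" "[Send y] @ \<tau>3"]] ff by (simp add: E_def)
    then have pre1: "prefix (Rc M (prv M p) \<tau>1 @ Rc M (prv M p) \<tau>2) (Sc M (prv M p) \<tau>1 @ Sc M (prv M p) \<tau>2)"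
      using sm ppn by simp
    have le1: "length (Rc M (prv M p) \<tau>1) \<le> length (Sc M (prv M p) \<tau>1)"
      using fifoP_last[OF f1] prefix_length_le by (fastforce simp: E_def)
    have pre2: "prefix (Rc M (prv M p) \<tau>2) (drop (length (Rc M (prv M p) \<tau>1)) (Sc M (prv M p) \<tau>1 @ Sc M (prv M p) \<tau>2))"
      using prefix_drop_app[OF pre1] .
    have np: "nxt M (prv M p) = p" using nxt_prv[OF pp] .
    have "after M E ?X0 (prv M p) = drop (length (Rc M (prv M p) \<tau>1)) (Sc M (prv M p) \<tau>1 @ Sc M (prv M p) \<tau>2 @ Sc M (prv M p) [Send y, Send m])"
      using RcA[of "prv M p"] ScA[of "prv M p"] np ppn by (simp add: E_def after_def)
    also have "\<dots> = drop (length (Rc M (prv M p) \<tau>1)) (Sc M (prv M p) \<tau>1 @ Sc M (prv M p) \<tau>2) @ Sc M (prv M p) [Send y, Send m]"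
      using le1 by (simp add: drop_append)
    finally have aX: "after M E ?X0 (prv M p) = drop (length (Rc M (prv M p) \<tau>1)) (Sc M (prv M p) \<tau>1 @ Sc M (prv M p) \<tau>2) @ Sc M (prv M p) [Send y, Send m]" .
    have eqB: "Rc M (prv M p) ?B = Rc M (prv M p) \<tau>2" using RcB[of "prv M p"] np by simp
    show "prefix (Rc M (prv M p) ?B) (after M E ?X0 (prv M p))"
      unfolding eqB aX by (rule prefix_prefix[OF pre2])
  qed
  have fX0B: "fifoP M E (?X0 @ ?B)" using fifoP_append[OF fX0] fB by blast
  have aeq: "after M E (?X0 @ ?B) = after M E (\<tau>1 @ [Send m] @ \<tau>2 @ [Send y])"
  proof -
    have "Sc M i (?X0 @ ?B) = Sc M i (\<tau>1 @ [Send m] @ \<tau>2 @ [Send y])" for i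
      using ScA[of i] ScB[of i] Sp2 Sk2 sm sy npp by auto
    moreover have "Rc M i (?X0 @ ?B) = Rc M i (\<tau>1 @ [Send m] @ \<tau>2 @ [Send y])" for i
      using RcA[of i] RcB[of i] by auto
    ultimately show ?thesis by (simp add: after_def fun_eq_iff)
  qed
  have f3: "fifoP M (after M E (\<tau>1 @ [Send m] @ \<tau>2 @ [Send y])) \<tau>3"
    using fifoP_append[OF fifoP_prefix[of M E "\<tau>1 @ [Send m] @ \<tau>2 @ [Send y]" \<tau>3]] ff by simp
  have fall: "fifoP M E ((?X0 @ ?B) @ \<tau>3)" using fifoP_append[OF fX0B] f3 aeq by simp
  have ch: "chan_of ?\<tau>' = chan_of ?\<tau>"
  proof (intro ext)
    fix i j show "chan_of ?\<tau>' i j = chan_of ?\<tau> i j" by (simp only: chan_of_def Sceq Rceq)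
  qed
  have "RC ?\<tau>' c"
    using rc mok' fall loceq ch by (simp add: RC_def E_def)
  then show ?thesis using run_RC by blast
qed

end


definition isS :: "'m msgset \<Rightarrow> nat \<Rightarrow> 'm action \<Rightarrow> bool" where
  "isS M i act = (case act of Send a \<Rightarrow> src M a = i | Recv a \<Rightarrow> False)"

lemma isS_simps[simp]: "isS M i (Send a) = (src M a = i)" "isS M i (Recv a) = False"
  by (auto simp: isS_def)

fun mu :: "'m msgset \<Rightarrow> nat \<Rightarrow> nat \<Rightarrow> 'm action list \<Rightarrow> nat" where
  "mu M p k [] = 0"
| "mu M p k (a # \<tau>) = (if isS M p a then length (filter (isS M k) \<tau>) else 0) + mu M p k \<tau>"

lemma mu_append: "mu M p k (X @ Y) = mu M p k X + mu M p k Y + length (filter (isS M p) X) * length (filter (isS M k) Y)"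
  by (induction X) (auto simp: algebra_simps)

lemma mu_nop: "filter (isS M p) X = [] \<Longrightarrow> mu M p k X = 0"
  by (induction X) (auto split: if_splits)

lemma filter_isS_nos: "(\<forall>a. Send a \<in> set X \<longrightarrow> src M a \<noteq> i) \<Longrightarrow> filter (isS M i) X = []"
proof (induction X)
  case (Cons x X) then show ?case by (cases x) auto
qed simp

lemma mu_decrease:
  assumes sm: "src M m = p" and sy: "src M y = k" and kp: "k \<noteq> p"
    and nos: "\<forall>a. Send a \<in> set \<tau>2 \<longrightarrow> src M a \<noteq> p \<and> src M a \<noteq> k"
  shows "mu M p k (\<tau>1 @ filter (\<lambda>a. actor M a \<noteq> p) \<tau>2 @ [Send y, Send m] @ filter (\<lambda>a. actor M a = p) \<tau>2 @ \<tau>3)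
         < mu M p k (\<tau>1 @ [Send m] @ \<tau>2 @ [Send y] @ \<tau>3)"
proof -
  let ?A = "filter (\<lambda>a. actor M a \<noteq> p) \<tau>2"
  let ?B = "filter (\<lambda>a. actor M a = p) \<tau>2"
  have n2p: "filter (isS M p) \<tau>2 = []" and n2k: "filter (isS M k) \<tau>2 = []"
    using nos by (auto intro: filter_isS_nos)
  have nAp: "filter (isS M p) ?A = []" by (rule filter_isS_nos) (use nos in auto)
  have nAk: "filter (isS M k) ?A = []" by (rule filter_isS_nos) (use nos in auto)
  have nBp: "filter (isS M p) ?B = []" by (rule filter_isS_nos) (use nos in auto)
  have nBk: "filter (isS M k) ?B = []" by (rule filter_isS_nos) (use nos in auto)
  have m2: "mu M p k \<tau>2 = 0" "mu M p k ?A = 0" "mu M p k ?B = 0"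
    using n2p nAp nBp mu_nop by blast+
  show ?thesis
    using m2 n2p n2k nAp nAk nBp nBk sm sy kp by (simp add: mu_append)
qed

lemma split_last_send:
  "Sc M p \<rho> \<noteq> [] \<Longrightarrow> \<exists>\<tau>1 m \<tau>2. \<rho> = \<tau>1 @ [Send m] @ \<tau>2 \<and> src M m = p \<and> (\<forall>a. Send a \<in> set \<tau>2 \<longrightarrow> src M a \<noteq> p)"
proof (induction \<rho> rule: rev_induct)
  case Nil then show ?case by simp
next
  case (snoc x \<rho>)
  show ?case
  proof (cases "isS M p x")
    case True
    then obtain m where "x = Send m" "src M m = p" by (cases x) auto
    then show ?thesis by (intro exI[of _ \<rho>] exI[of _ m] exI[of _ "[]"]) simp
  next
    case False
    then have "Sc M p \<rho> \<noteq> []" using snoc.prems by (cases x) auto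
    then obtain \<tau>1 m \<tau>2 where "\<rho> = \<tau>1 @ [Send m] @ \<tau>2" "src M m = p" "\<forall>a. Send a \<in> set \<tau>2 \<longrightarrow> src M a \<noteq> p"
      using snoc.IH by blast
    then show ?thesis using False by (intro exI[of _ \<tau>1] exI[of _ m] exI[of _ "\<tau>2 @ [x]"]) (auto simp: isS_def)
  qed
qed

lemma sends_filter_nop: "(\<forall>a. Send a \<in> set \<tau>2 \<longrightarrow> src M a \<noteq> p) \<Longrightarrow> sends (filter (\<lambda>a. actor M a \<noteq> p) \<tau>2) = sends \<tau>2"
proof (induction \<tau>2)
  case (Cons x \<tau>2) then show ?case by (cases x) auto
qed simp

lemma sends_filter_p: "(\<forall>a. Send a \<in> set \<tau>2 \<longrightarrow> src M a \<noteq> p) \<Longrightarrow> sends (filter (\<lambda>a. actor M a = p) \<tau>2) = []"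
proof (induction \<tau>2)
  case (Cons x \<tau>2) then show ?case by (cases x) auto
qed simp

lemma set_sends: "a \<in> set (sends \<tau>) \<longleftrightarrow> Send a \<in> set \<tau>"
proof (induction \<tau>)
  case (Cons x \<tau>) then show ?case by (cases x) auto
qed simp

context ring_sys
begin

lemma chans_run: "run M P (init_config P) \<tau> c \<Longrightarrow> chans c p (nxt M p) = drop (length (Rc M p \<tau>)) (Sc M p \<tau>)"
  by (simp add: run_RC RC_def chan_of_def)

lemma run_prefix: "run M P (init_config P) (A @ B) c \<Longrightarrow> \<exists>c'. run M P (init_config P) A c'"
  by (auto simp: run_append)

lemma run_fifo: "run M P (init_config P) \<tau> c \<Longrightarrow> fifoP M (\<lambda>_. []) \<tau>"
  by (simp add: run_RC RC_def)

lemma run_msgs: "run M P (init_config P) \<tau> c \<Longrightarrow> msgs_ok \<tau>"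
  by (simp add: run_RC RC_def)

lemma run_le: "run M P (init_config P) \<tau> c \<Longrightarrow> length (Rc M p \<tau>) \<le> length (Sc M p \<tau>)"
  using fifoP_last[OF run_fifo] prefix_length_le by fastforce

lemma inv_proj:
  assumes k: "k \<in> {1..N}" and pk: "p = prv M k"
  shows "msgs_ok \<rho> \<Longrightarrow> fifoP M (\<lambda>_. []) \<rho> \<Longrightarrow>
    (\<forall>\<rho>' y r'. \<rho> = \<rho>' @ [Send y] @ r' \<longrightarrow> src M y = k \<longrightarrow> length (Rc M p \<rho>') = length (Sc M p \<rho>')) \<Longrightarrow>
    proj M k (sends \<rho>) = loc M k \<rho> @ map Recv (drop (length (Rc M p \<rho>)) (Sc M p \<rho>))"
proof (induction \<rho> rule: rev_induct)
  case Nil then show ?case by simp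
next
  case (snoc a \<rho>)
  have m: "msgs_ok \<rho>" "msg_of a \<in> msgs M" using snoc.prems by auto
  have f: "fifoP M (\<lambda>_. []) \<rho>" using snoc.prems fifoP_prefix by blast
  have g: "\<forall>\<rho>' y r'. \<rho> = \<rho>' @ [Send y] @ r' \<longrightarrow> src M y = k \<longrightarrow> length (Rc M p \<rho>') = length (Sc M p \<rho>')"
    using snoc.prems(3) by (metis append_assoc)
  have IH: "proj M k (sends \<rho>) = loc M k \<rho> @ map Recv (drop (length (Rc M p \<rho>)) (Sc M p \<rho>))"
    using snoc.IH m f g by blast
  have le: "length (Rc M p \<rho>) \<le> length (Sc M p \<rho>)" using fifoP_last[OF f] prefix_length_le by fastforce
  have kp: "k \<noteq> p" using prv_neq[OF k] pk by auto
  show ?case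
  proof (cases a)
    case (Send b)
    have bm: "b \<in> msgs M" using m Send by simp
    have dk: "dst M b = k \<longleftrightarrow> src M b = p" using dst_iff[OF bm k] pk by simp
    consider "src M b = k" | "src M b = p" | "src M b \<noteq> k" "src M b \<noteq> p" by blast
    then show ?thesis
    proof cases
      case 1
      have "length (Rc M p \<rho>) = length (Sc M p \<rho>)" using snoc.prems(3) Send 1 by (metis append_Nil2)
      then have d: "drop (length (Rc M p \<rho>)) (Sc M p \<rho>) = []" by simp
      have "dst M b \<noteq> k" using dk 1 kp by simp
      then show ?thesis using IH d Send 1 kp by simp
    next
      case 2
      have "dst M b = k" using dk 2 by simp
      then show ?thesis using IH Send 2 kp le by (simp add: drop_append)
    next
      case 3
      have "dst M b \<noteq> k" using dk 3 by simp
      then show ?thesis using IH Send 3 by simp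
    qed
  next
    case (Recv b)
    have bm: "b \<in> msgs M" using m Recv by simp
    have dk: "dst M b = k \<longleftrightarrow> src M b = p" using dst_iff[OF bm k] pk by simp
    show ?thesis
    proof (cases "src M b = p")
      case True
      have pre: "prefix (Rc M p \<rho> @ [b]) (Sc M p \<rho>)"
        using fifoP_last[OF snoc.prems(2), of p] Recv True by simp
      have "drop (length (Rc M p \<rho>)) (Sc M p \<rho>) = b # drop (Suc (length (Rc M p \<rho>))) (Sc M p \<rho>)"
        using prefix_drop_Cons[OF pre] .
      then show ?thesis using IH Recv True dk by simp
    next
      case False
      then show ?thesis using IH Recv dk by simp
    qed
  qed
qed

lemma good_proj:
  assumes k: "k \<in> {1..N}" and pk: "p = prv M k"
    and r: "run M P (init_config P) \<tau> c" and ar: "chans c p k = []"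
    and g: "\<forall>\<rho>' y r'. \<tau> = \<rho>' @ [Send y] @ r' \<longrightarrow> src M y = k \<longrightarrow> length (Rc M p \<rho>') = length (Sc M p \<rho>')"
  shows "proj M k (sends \<tau>) = loc M k \<tau>"
proof -
  have pp: "p \<in> {1..N}" using prv_range[OF k] pk by simp
  have "drop (length (Rc M p \<tau>)) (Sc M p \<tau>) = []"
    using chans_run[OF r, of p] ar nxt_prv[OF k] pk by simp
  then show ?thesis using inv_proj[OF k pk run_msgs[OF r] run_fifo[OF r] g] by simp
qed

lemma find_notch:
  assumes k: "k \<in> {1..N}" and pk: "p = prv M k"
    and r: "run M P (init_config P) \<tau> c"
    and bad: "\<exists>\<rho> y rest. \<tau> = \<rho> @ [Send y] @ rest \<and> src M y = k \<and> length (Rc M p \<rho>) \<noteq> length (Sc M p \<rho>)"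
  shows "\<exists>\<tau>1 m \<tau>2 y \<tau>3. \<tau> = \<tau>1 @ [Send m] @ \<tau>2 @ [Send y] @ \<tau>3 \<and> src M m = p \<and> src M y = k \<and>
           (\<forall>a. Send a \<in> set \<tau>2 \<longrightarrow> src M a \<noteq> p \<and> src M a \<noteq> k) \<and>
           length (Rc M p (\<tau>1 @ \<tau>2)) \<le> length (Sc M p \<tau>1)"
proof -
  define Pr where "Pr n \<longleftrightarrow> (\<exists>\<rho> y rest. \<tau> = \<rho> @ [Send y] @ rest \<and> length \<rho> = n \<and> src M y = k \<and> length (Rc M p \<rho>) \<noteq> length (Sc M p \<rho>))" for n
  obtain \<rho>0 y0 rest0 where b0: "\<tau> = \<rho>0 @ [Send y0] @ rest0" "src M y0 = k" "length (Rc M p \<rho>0) \<noteq> length (Sc M p \<rho>0)"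
    using bad by blast
  have "Pr (length \<rho>0)" unfolding Pr_def using b0 by blast
  then obtain n0 where "Pr n0" by blast
  define n where "n = (LEAST n. Pr n)"
  have Pn: "Pr n" using LeastI[of Pr n0] \<open>Pr n0\<close> by (simp add: n_def)
  have minn: "\<And>n'. Pr n' \<Longrightarrow> n \<le> n'" using Least_le[of Pr] by (simp add: n_def)
  obtain \<rho> y rest where rho: "\<tau> = \<rho> @ [Send y] @ rest" "length \<rho> = n" "src M y = k" "length (Rc M p \<rho>) \<noteq> length (Sc M p \<rho>)"
    using Pn Pr_def by blast
  have rr: "\<exists>c'. run M P (init_config P) \<rho> c'" using run_prefix[of \<rho> "[Send y] @ rest"] r rho(1) by simp
  obtain c1 where c1: "run M P (init_config P) \<rho> c1" using rr by blast
  have le: "length (Rc M p \<rho>) \<le> length (Sc M p \<rho>)" using run_le[OF c1] .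
  then have lt: "length (Rc M p \<rho>) < length (Sc M p \<rho>)" using rho(4) by simp
  then have "Sc M p \<rho> \<noteq> []" by auto
  then obtain \<tau>1 m \<tau>2 where sp: "\<rho> = \<tau>1 @ [Send m] @ \<tau>2" "src M m = p" "\<forall>a. Send a \<in> set \<tau>2 \<longrightarrow> src M a \<noteq> p"
    using split_last_send[of M p \<rho>] by blast
  have Sp2: "Sc M p \<tau>2 = []" using Sc_no[of \<tau>2 M p] sp(3) by blast
  have Sr: "Sc M p \<rho> = Sc M p \<tau>1 @ [m]" using sp Sp2 by simp
  have cnt: "length (Rc M p (\<tau>1 @ \<tau>2)) \<le> length (Sc M p \<tau>1)" using lt Sr sp(1) by simp
  have nok: "\<forall>a. Send a \<in> set \<tau>2 \<longrightarrow> src M a \<noteq> k"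
  proof (intro allI impI notI)
    fix a assume a: "Send a \<in> set \<tau>2" and ak: "src M a = k"
    obtain u v where uv0: "\<tau>2 = u @ Send a # v" using split_list[OF a] by blast
    then have uv: "\<tau>2 = u @ [Send a] @ v" by simp
    define \<rho>' where "\<rho>' = \<tau>1 @ [Send m] @ u"
    have t': "\<tau> = \<rho>' @ [Send a] @ (v @ [Send y] @ rest)" using rho(1) sp(1) uv by (simp add: \<rho>'_def)
    have Su: "Sc M p u = []" using Sp2 uv by simp
    have "length (Rc M p \<rho>') \<le> length (Rc M p \<rho>)" using sp(1) uv by (simp add: \<rho>'_def)
    moreover have "length (Sc M p \<rho>') = length (Sc M p \<rho>)" using Su Sr sp(2) by (simp add: \<rho>'_def)
    ultimately have "length (Rc M p \<rho>') \<noteq> length (Sc M p \<rho>')" using lt by simp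
    then have "Pr (length \<rho>')" unfolding Pr_def
      by (intro exI[of _ \<rho>'] exI[of _ a] exI[of _ "v @ [Send y] @ rest"]) (use t' ak in simp)
    then have "n \<le> length \<rho>'" using minn by blast
    moreover have "length \<rho>' < length \<rho>" using sp(1) uv by (simp add: \<rho>'_def)
    ultimately show False using rho(2) by simp
  qed
  show ?thesis using rho(1,3) sp cnt nok by (intro exI[of _ \<tau>1] exI[of _ m] exI[of _ \<tau>2] exI[of _ y] exI[of _ rest]) auto
qed

lemma nm_loc:
  assumes sm: "src M m = p" and sy: "src M y = k" and kp: "k \<noteq> p"
  shows "loc M i (\<tau>1 @ filter (\<lambda>a. actor M a \<noteq> p) \<tau>2 @ [Send y, Send m] @ filter (\<lambda>a. actor M a = p) \<tau>2 @ \<tau>3)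
       = loc M i (\<tau>1 @ [Send m] @ \<tau>2 @ [Send y] @ \<tau>3)"
  using sm sy kp by (auto simp: loc_filter_ne loc_filter_eq)

end


context ring_os
begin

lemma chain:
  assumes k: "k \<in> {1..N}" and pk: "p = prv M k"
    and z: "\<zeta> = [] \<or> (\<exists>x. \<zeta> = [Send x] \<and> x \<in> msgs M \<and> src M x = k)"
  shows "run M P (init_config P) \<tau> c \<Longrightarrow> chans c p k = [] \<Longrightarrow>
     (\<forall>\<tau>' c'. run M P (init_config P) \<tau>' c' \<longrightarrow> length (sends \<tau>') = length (sends \<tau>) \<longrightarrow> Ssync (sends \<tau>')) \<Longrightarrow>
     lpath (P k) (init (P k)) (loc M k \<tau> @ \<zeta>) e \<Longrightarrow>
     \<exists>e'. lpath (P k) (init (P k)) (proj M k (sends \<tau>) @ \<zeta>) e' \<and> (\<zeta> = [] \<longrightarrow> e' = e)"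
proof (induction "mu M p k \<tau>" arbitrary: \<tau> e rule: less_induct)
  case less
  note r = less.prems(1) and ar = less.prems(2) and env = less.prems(3) and pth = less.prems(4)
  show ?case
  proof (cases "\<exists>\<rho> y rest. \<tau> = \<rho> @ [Send y] @ rest \<and> src M y = k \<and> length (Rc M p \<rho>) \<noteq> length (Sc M p \<rho>)")
    case False
    have g: "\<forall>\<rho>' y r'. \<tau> = \<rho>' @ [Send y] @ r' \<longrightarrow> src M y = k \<longrightarrow> length (Rc M p \<rho>') = length (Sc M p \<rho>')"
    proof (intro allI impI)
      fix \<rho>' y r' assume a: "\<tau> = \<rho>' @ [Send y] @ r'" and b: "src M y = k"
      show "length (Rc M p \<rho>') = length (Sc M p \<rho>')"
      proof (rule ccontr)
        assume c: "length (Rc M p \<rho>') \<noteq> length (Sc M p \<rho>')"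
        have "\<exists>\<rho> y rest. \<tau> = \<rho> @ [Send y] @ rest \<and> src M y = k \<and> length (Rc M p \<rho>) \<noteq> length (Sc M p \<rho>)"
          by (intro exI[of _ \<rho>'] exI[of _ y] exI[of _ r']) (use a b c in simp)
        then show False using False by simp
      qed
    qed
    have "proj M k (sends \<tau>) = loc M k \<tau>" using good_proj[OF k pk r ar g] .
    then show ?thesis using pth by auto
  next
    case True
    obtain \<tau>1 m \<tau>2 y \<tau>3 where sp: "\<tau> = \<tau>1 @ [Send m] @ \<tau>2 @ [Send y] @ \<tau>3" "src M m = p" "src M y = k"
      "\<forall>a. Send a \<in> set \<tau>2 \<longrightarrow> src M a \<noteq> p \<and> src M a \<noteq> k" "length (Rc M p (\<tau>1 @ \<tau>2)) \<le> length (Sc M p \<tau>1)"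
      using find_notch[OF k pk r True] by blast
    define \<tau>' where "\<tau>' = \<tau>1 @ filter (\<lambda>a. actor M a \<noteq> p) \<tau>2 @ [Send y, Send m] @ filter (\<lambda>a. actor M a = p) \<tau>2 @ \<tau>3"
    have kp: "k \<noteq> p" using prv_neq[OF k] pk by auto
    have ky: "nxt M p = k" using nxt_prv[OF k] pk by simp
    have r0: "run M P (init_config P) (\<tau>1 @ [Send m] @ \<tau>2 @ [Send y] @ \<tau>3) c" using r sp(1) by simp
    have r': "run M P (init_config P) \<tau>' c"
      unfolding \<tau>'_def by (rule nm_run[OF r0 sp(2)]) (use sp ky in auto)
    have mu': "mu M p k \<tau>' < mu M p k \<tau>"
      unfolding \<tau>'_def sp(1) by (rule mu_decrease[OF sp(2) sp(3) kp sp(4)])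
    have nop: "\<forall>a. Send a \<in> set \<tau>2 \<longrightarrow> src M a \<noteq> p" using sp(4) by blast
    have st': "sends \<tau>' = sends \<tau>1 @ sends \<tau>2 @ [y, m] @ sends \<tau>3"
      using sends_filter_nop[OF nop] sends_filter_p[OF nop] by (simp add: \<tau>'_def)
    have st: "sends \<tau> = sends \<tau>1 @ [m] @ sends \<tau>2 @ [y] @ sends \<tau>3" using sp(1) by simp
    have len: "length (sends \<tau>') = length (sends \<tau>)" using st st' by simp
    have loc': "loc M k \<tau>' = loc M k \<tau>" unfolding \<tau>'_def sp(1) by (rule nm_loc[OF sp(2) sp(3) kp])
    have env': "\<forall>\<tau>'' c'. run M P (init_config P) \<tau>'' c' \<longrightarrow> length (sends \<tau>'') = length (sends \<tau>') \<longrightarrow> Ssync (sends \<tau>'')"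
      using env len by simp
    have pth': "lpath (P k) (init (P k)) (loc M k \<tau>' @ \<zeta>) e" using pth loc' by simp
    obtain e'' where e'': "lpath (P k) (init (P k)) (proj M k (sends \<tau>') @ \<zeta>) e''" "\<zeta> = [] \<longrightarrow> e'' = e"
      using less.hyps[OF mu' r' ar env' pth'] by blast
    have envt: "Ssync (sends \<tau>)" using env[rule_format, OF r] by simp
    have sb: "\<forall>b\<in>set (sends \<tau>2). src M b \<noteq> p \<and> src M b \<noteq> k" using sp(4) by (simp add: set_sends)
    have pthc: "lpath (P k) (init (P k)) (proj M k (sends \<tau>1 @ sends \<tau>2 @ [y, m] @ sends \<tau>3) @ \<zeta>) e''"
      using e''(1) st' by simp
    obtain \<Theta> c\<Theta> where th: "run M P (init_config P) \<Theta> c\<Theta>" "bounded_fifo_trace M 1 \<Theta>"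
      "sends \<Theta> = sends \<tau> @ sends \<zeta>" "ctrl c\<Theta> k = e''" "\<zeta> = [] \<longrightarrow> chans c\<Theta> = (\<lambda>i j. [])"
      using chain_step[OF k pk st envt sp(2) sp(3) sb pthc z] by blast
    show ?thesis
    proof (cases "\<zeta> = []")
      case True
      have "\<forall>i\<in>{1..N}. lpath (P i) (init (P i)) (proj M i (sends \<Theta>)) (ctrl c\<Theta> i)"
        using os_inr[OF th(1) th(2)] th(5) True by blast
      then have "lpath (P k) (init (P k)) (proj M k (sends \<tau>)) e''" using k th(3,4) True by auto
      then show ?thesis using True e''(2) by auto
    next
      case False
      then obtain x where x: "\<zeta> = [Send x]" "x \<in> msgs M" "src M x = k" using z by blast
      have "Ssync (sends \<tau> @ [x])" using os_inl[OF th(1) th(2)] th(3) x by simp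
      then obtain q where q: "lpath (P k) (init (P k)) (proj M k (sends \<tau> @ [x])) q" using Ssync_paths k by blast
      have dx: "dst M x \<noteq> k" using msg_top[OF x(2)] x(3) nxt_neq[OF k] by simp
      have "lpath (P k) (init (P k)) (proj M k (sends \<tau>) @ \<zeta>) q" using q x dx by simp
      then show ?thesis using False by blast
    qed
  qed
qed

lemma claim:
  assumes IH: "\<forall>\<tau>' c'. run M P (init_config P) \<tau>' c' \<longrightarrow> length (sends \<tau>') \<le> n \<longrightarrow> Ssync (sends \<tau>')"
  shows "length (sends \<tau>0) \<le> n \<Longrightarrow> run M P (init_config P) \<tau>0 c0 \<Longrightarrow> x \<in> msgs M \<Longrightarrow>
    lpath (P (src M x)) (init (P (src M x))) (loc M (src M x) \<tau>0 @ [Send x]) e0 \<Longrightarrow> Ssync (sends \<tau>0 @ [x])"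
proof (induction "length (sends \<tau>0)" arbitrary: \<tau>0 c0 e0 rule: less_induct)
  case less
  note ln = less.prems(1) and r = less.prems(2) and xm = less.prems(3) and pth = less.prems(4)
  define j where "j = src M x"
  define p where "p = prv M j"
  have j: "j \<in> {1..N}" using msg_top[OF xm] by (simp add: j_def)
  have pp: "p \<in> {1..N}" using prv_range[OF j] by (simp add: p_def)
  have jp: "j \<noteq> p" using prv_neq[OF j] by (simp add: p_def)
  have npj: "nxt M p = j" using nxt_prv[OF j] by (simp add: p_def)
  have env0: "Ssync (sends \<tau>0)" using IH[rule_format, OF r ln] .
  have z: "[Send x] = [] \<or> (\<exists>x'. [Send x] = [Send x'] \<and> x' \<in> msgs M \<and> src M x' = j)" using xm by (simp add: j_def)
  show ?case
  proof (cases "chans c0 p j = []")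
    case True
    have env: "\<forall>\<tau>' c'. run M P (init_config P) \<tau>' c' \<longrightarrow> length (sends \<tau>') = length (sends \<tau>0) \<longrightarrow> Ssync (sends \<tau>')"
    proof (intro allI impI)
      fix \<tau>' c' assume a: "run M P (init_config P) \<tau>' c'" "length (sends \<tau>') = length (sends \<tau>0)"
      then have "length (sends \<tau>') \<le> n" using ln by simp
      then show "Ssync (sends \<tau>')" using IH[rule_format, OF a(1)] by simp
    qed
    obtain e' where e': "lpath (P j) (init (P j)) (proj M j (sends \<tau>0) @ [Send x]) e'"
      using chain[OF j p_def z r True env] pth by (auto simp: j_def)
    obtain \<Theta> c\<Theta> where th: "run M P (init_config P) \<Theta> c\<Theta>" "bounded_fifo_trace M 1 \<Theta>" "sends \<Theta> = sends \<tau>0 @ [x]"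
      using sync_send_constr[OF j env0 xm _ e'] by (auto simp: j_def)
    show ?thesis using os_inl[OF th(1) th(2)] th(3) by simp
  next
    case False
    have "chans c0 p j = drop (length (Rc M p \<tau>0)) (Sc M p \<tau>0)" using chans_run[OF r, of p] npj by simp
    then have lt: "length (Rc M p \<tau>0) < length (Sc M p \<tau>0)" using False by simp
    then have "Sc M p \<tau>0 \<noteq> []" by auto
    then obtain \<rho>1 m \<rho>2 where sp: "\<tau>0 = \<rho>1 @ [Send m] @ \<rho>2" "src M m = p" "\<forall>a. Send a \<in> set \<rho>2 \<longrightarrow> src M a \<noteq> p"
      using split_last_send[of M p \<tau>0] by blast
    have Sp2: "Sc M p \<rho>2 = []" using Sc_no[of \<rho>2 M p] sp(3) by blast
    have cnt: "length (Rc M p (\<rho>1 @ \<rho>2)) \<le> length (Sc M p \<rho>1)" using lt sp Sp2 by simp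
    have r0: "run M P (init_config P) (\<rho>1 @ [Send m] @ \<rho>2) c0" using r sp(1) by simp
    obtain c0' where r': "run M P (init_config P) (\<rho>1 @ filter (\<lambda>a. actor M a \<noteq> p) \<rho>2) c0'"
      using del_run[OF r0 sp(2) cnt] by blast
    let ?\<tau>0' = "\<rho>1 @ filter (\<lambda>a. actor M a \<noteq> p) \<rho>2"
    have s': "sends ?\<tau>0' = sends \<rho>1 @ sends \<rho>2" using sends_filter_nop[OF sp(3)] by simp
    have s0: "sends \<tau>0 = sends \<rho>1 @ [m] @ sends \<rho>2" using sp(1) by simp
    have lt2: "length (sends ?\<tau>0') < length (sends \<tau>0)" using s' s0 by simp
    have ln2: "length (sends ?\<tau>0') \<le> n" using lt2 ln by simp
    have lj: "loc M j ?\<tau>0' = loc M j \<tau>0" using sp(1,2) jp by (simp add: loc_filter_ne)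
    have pth2: "lpath (P (src M x)) (init (P (src M x))) (loc M (src M x) ?\<tau>0' @ [Send x]) e0"
      using pth lj by (simp add: j_def)
    have S2: "Ssync (sends ?\<tau>0' @ [x])" using less.hyps[OF lt2 ln2 r' xm pth2] .
    obtain q where q: "lpath (P j) (init (P j)) (proj M j (sends ?\<tau>0' @ [x])) q" using Ssync_paths[OF S2 j] by blast
    have dx: "dst M x \<noteq> j" using msg_top[OF xm] nxt_neq[OF j] by (simp add: j_def)
    have q2: "lpath (P j) (init (P j)) (proj M j (sends \<rho>1 @ sends \<rho>2) @ [Send x]) q"
      using q s' dx by (simp add: j_def)
    have sb: "\<forall>b\<in>set (sends \<rho>2). src M b \<noteq> p" using sp(3) by (simp add: set_sends)
    obtain \<Theta> c\<Theta> where th: "run M P (init_config P) \<Theta> c\<Theta>" "bounded_fifo_trace M 1 \<Theta>" "sends \<Theta> = sends \<tau>0 @ [x]"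
      using stepA_constr[OF j p_def s0 env0 sp(2) sb xm _ q2] by (auto simp: j_def)
    show ?thesis using os_inl[OF th(1) th(2)] th(3) by simp
  qed
qed

lemma last_send_split: "sends \<tau> \<noteq> [] \<Longrightarrow> \<exists>\<tau>1 x \<rho>. \<tau> = \<tau>1 @ [Send x] @ \<rho> \<and> sends \<rho> = []"
proof (induction \<tau> rule: rev_induct)
  case Nil then show ?case by simp
next
  case (snoc a \<tau>)
  show ?case
  proof (cases a)
    case (Send x) then show ?thesis by (intro exI[of _ \<tau>] exI[of _ x] exI[of _ "[]"]) simp
  next
    case (Recv b)
    then have "sends \<tau> \<noteq> []" using snoc.prems by simp
    then obtain \<tau>1 x \<rho> where "\<tau> = \<tau>1 @ [Send x] @ \<rho>" "sends \<rho> = []" using snoc.IH by blast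
    then show ?thesis using Recv by (intro exI[of _ \<tau>1] exI[of _ x] exI[of _ "\<rho> @ [a]"]) simp
  qed
qed

theorem inl: "run M P (init_config P) \<tau> c \<Longrightarrow> Ssync (sends \<tau>)"
proof (induction "length (sends \<tau>)" arbitrary: \<tau> c rule: less_induct)
  case less
  show ?case
  proof (cases "sends \<tau> = []")
    case True
    have "Ssync []" unfolding Ssync_iff by (auto intro: lpath.intros)
    then show ?thesis using True by simp
  next
    case False
    then obtain \<tau>1 x \<rho> where sp: "\<tau> = \<tau>1 @ [Send x] @ \<rho>" "sends \<rho> = []" using last_send_split by blast
    have r1: "\<exists>c1. run M P (init_config P) (\<tau>1 @ [Send x]) c1"
      using run_prefix[of "\<tau>1 @ [Send x]" \<rho>] less.prems sp(1) by simp
    then obtain c1 where c1: "run M P (init_config P) (\<tau>1 @ [Send x]) c1" by blast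
    have rc1: "RC (\<tau>1 @ [Send x]) c1" using c1 run_RC by blast
    have xm: "x \<in> msgs M" using rc1 by (simp add: RC_def)
    have j: "src M x \<in> {1..N}" using msg_top[OF xm] by simp
    have pth0: "lpath (P (src M x)) (init (P (src M x))) (loc M (src M x) (\<tau>1 @ [Send x])) (ctrl c1 (src M x))"
      using rc1 j unfolding RC_def by blast
    then have pth: "lpath (P (src M x)) (init (P (src M x))) (loc M (src M x) \<tau>1 @ [Send x]) (ctrl c1 (src M x))"
      by simp
    obtain c0 where c0: "run M P (init_config P) \<tau>1 c0" using run_prefix[of \<tau>1 "[Send x]"] c1 by blast
    have lt: "length (sends \<tau>1) < length (sends \<tau>)" using sp by simp
    have IH: "\<forall>\<tau>' c'. run M P (init_config P) \<tau>' c' \<longrightarrow> length (sends \<tau>') \<le> length (sends \<tau>1) \<longrightarrow> Ssync (sends \<tau>')"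
    proof (intro allI impI)
      fix \<tau>' c' assume a: "run M P (init_config P) \<tau>' c'" "length (sends \<tau>') \<le> length (sends \<tau>1)"
      then have "length (sends \<tau>') < length (sends \<tau>)" using lt by simp
      then show "Ssync (sends \<tau>')" using less.hyps a(1) by blast
    qed
    have "Ssync (sends \<tau>1 @ [x])" using claim[OF IH order_refl c0 xm pth] .
    then show ?thesis using sp by simp
  qed
qed

theorem inr:
  assumes r: "run M P (init_config P) \<tau> c" and st: "chans c = (\<lambda>i j. [])"
  shows "\<forall>k\<in>{1..N}. lpath (P k) (init (P k)) (proj M k (sends \<tau>)) (ctrl c k)"
proof
  fix k assume k: "k \<in> {1..N}"
  have z: "([] :: 'm action list) = [] \<or> (\<exists>x. ([] :: 'm action list) = [Send x] \<and> x \<in> msgs M \<and> src M x = k)" by simp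
  have env: "\<forall>\<tau>' c'. run M P (init_config P) \<tau>' c' \<longrightarrow> length (sends \<tau>') = length (sends \<tau>) \<longrightarrow> Ssync (sends \<tau>')"
  proof (intro allI impI)
    fix \<tau>' c' assume a: "run M P (init_config P) \<tau>' c'"
    show "Ssync (sends \<tau>')" by (rule inl[OF a])
  qed
  have ar: "chans c (prv M k) k = []" using st by simp
  have pth: "lpath (P k) (init (P k)) (loc M k \<tau> @ []) (ctrl c k)"
    using r k by (simp add: run_RC RC_def)
  show "lpath (P k) (init (P k)) (proj M k (sends \<tau>)) (ctrl c k)"
    using chain[OF k refl z r ar env pth] by simp
qed

end


lemma send_traces_mono: "T \<subseteq> T' \<Longrightarrow> send_traces M P T \<subseteq> send_traces M P T'"
  unfolding send_traces_def by blast

context ring_sys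
begin

lemma traces0_sub1: "traces M P 0 \<subseteq> traces M P 1"
proof
  fix \<tau> assume t: "\<tau> \<in> traces M P 0"
  then have s: "synchronous_trace \<tau>" and r: "\<exists>c. run M P (init_config P) \<tau> c" by (auto simp: traces_def)
  then obtain c where rc: "run M P (init_config P) \<tau> c" by blast
  have e: "\<tau> = sync_acts (sends \<tau>)" using s synchronous_trace_iff by blast
  have m: "msgs_ok \<tau>" using run_msgs[OF rc] .
  have f: "fifoP M (\<lambda>_. []) \<tau>" using run_fifo[OF rc] .
  have b: "bnd M 1 (\<lambda>_. []) (sync_acts (sends \<tau>))" by (rule bnd_sync_acts) auto
  have "bounded_fifo_trace M 1 \<tau>" using bounded_fifo_of[OF m f] b e by simp
  then show "\<tau> \<in> traces M P 1" using rc by (auto simp: traces_def)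
qed

lemma traces1_subw: "traces M P 1 \<subseteq> traces_omega M P"
  by (auto simp: traces_omega_def)

lemma ST0_sub_STw: "ST M P 0 \<subseteq> ST_omega M P"
proof -
  have "traces M P 0 \<subseteq> traces_omega M P" using traces0_sub1 traces1_subw by (rule order_trans)
  then show ?thesis unfolding ST_def ST_omega_def by (rule send_traces_mono)
qed

lemma ST0_sub_ST1: "ST M P 0 \<subseteq> ST M P 1"
  unfolding ST_def by (rule send_traces_mono[OF traces0_sub1])

lemma ST1_sub_STw: "ST M P 1 \<subseteq> ST_omega M P"
  unfolding ST_def ST_omega_def by (rule send_traces_mono[OF traces1_subw])

end

context ring_os
begin

lemma STw_sub_ST0: "ST_omega M P \<subseteq> ST M P 0"
proof
  fix z assume z: "z \<in> ST_omega M P"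
  then consider (L) \<tau> where "z = Inl (sends \<tau>)" "\<tau> \<in> traces_omega M P"
    | (R) \<tau> c where "z = Inr (sends \<tau>, c)" "\<tau> \<in> traces_omega M P" "run M P (init_config P) \<tau> c" "stable c"
    unfolding ST_omega_def send_traces_def by (elim UnE imageE) (auto simp only: mem_Collect_eq)
  then show "z \<in> ST M P 0"
  proof cases
    case L
    then obtain c where rc: "run M P (init_config P) \<tau> c" by (auto simp: traces_omega_def traces_def)
    have "Ssync (sends \<tau>)" using inl[OF rc] .
    then obtain \<sigma> c' where "synchronous_trace \<sigma>" "run M P (init_config P) \<sigma> c'" "sends \<sigma> = sends \<tau>"
      by (auto simp: Ssync_def)
    then have "\<sigma> \<in> traces M P 0" "sends \<sigma> = sends \<tau>" by (auto simp: traces_def)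
    then have "sends \<tau> \<in> {sends \<tau> |\<tau>. \<tau> \<in> traces M P 0}" by (metis (mono_tags, lifting) mem_Collect_eq)
    then show ?thesis unfolding L(1) ST_def send_traces_def by (intro UnI1 imageI)
  next
    case R
    have st: "chans c = (\<lambda>i j. [])" using R(4) by (auto simp: stable_def fun_eq_iff)
    have paths: "\<forall>k\<in>{1..N}. lpath (P k) (init (P k)) (proj M k (sends \<tau>)) (ctrl c k)" using inr[OF R(3) st] .
    have rc: "RC \<tau> c" using R(3) run_RC by blast
    have ms: "\<forall>a\<in>set (sends \<tau>). a \<in> msgs M"
    proof
      fix a assume "a \<in> set (sends \<tau>)"
      then have "Send a \<in> set \<tau>" by (simp add: set_sends)
      then show "a \<in> msgs M" using rc by (force simp: RC_def msgs_ok_def)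
    qed
    have outs: "\<forall>i. i \<notin> {1..N} \<longrightarrow> ctrl c i = init (P i)" using rc by (simp add: RC_def)
    have rs: "run M P (init_config P) (sync_acts (sends \<tau>)) c"
      using ms paths outs st by (simp add: sync_run_iff)
    have "sync_acts (sends \<tau>) \<in> traces M P 0" using rs synchronous_sync_acts by (auto simp: traces_def)
    then have "(sends \<tau>, c) \<in> {(sends \<tau>, c) |\<tau> c. \<tau> \<in> traces M P 0 \<and> run M P (init_config P) \<tau> c \<and> stable c}"
      using rs R(4) by (metis (mono_tags, lifting) mem_Collect_eq sends_sync_acts)
    then show ?thesis unfolding R(1) ST_def send_traces_def by (intro UnI2 imageI)
  qed
qed

end

theorem theorem4p15:
  fixes M :: "'m msgset" and P :: "nat \<Rightarrow> ('s, 'm) peer"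
  assumes "wf_msgset M"
    and "oriented_ring M"
    and "wf_system M P"
  shows "one_synchronizable M P \<longleftrightarrow> synchronizable M P"
proof -
  interpret ring_sys M P using assms by (unfold_locales)
  show ?thesis
  proof
    assume os: "one_synchronizable M P"
    interpret ring_os M P using assms os by (unfold_locales)
    show "synchronizable M P"
      unfolding synchronizable_def using ST0_sub_STw STw_sub_ST0 by blast
  next
    assume sy: "synchronizable M P"
    then have "ST M P 0 = ST_omega M P" by (simp add: synchronizable_def)
    then show "one_synchronizable M P"
      unfolding one_synchronizable_def using ST0_sub_ST1 ST1_sub_STw by blast
  qed
qed


end
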